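(* (i) For a decreasing $\Lambda:\mathbb{R}\to(0,1]$, $\mathrm{ES}_\Lambda=\min\{\rho:L^1\to\overline{\mathbb{R}}\mid\rho\ge\mathrm{VaR}_\Lambda\text{ and }\rho\text{ is quasi-convex and law invariant}\}$. (ii) For a decreasing $\Lambda:\mathbb{R}\to(0,1)$, $\mathrm{ES}_\Lambda=\min\{\rho:L^1\to\overline{\mathbb{R}}\mid\rho\ge\mathrm{VaR}^+_\Lambda\text{ and }\rho\text{ is quasi-convex and law invariant}\}$. (iii) For a decreasing $\Lambda:\mathbb{R}\to[0,1)$, $\mathrm{ES}_\Lambda=\min\{\rho:\underline{L}^1\to\overline{\mathbb{R}}\mid\rho\ge\mathrm{VaR}^+_\Lambda\text{ and }\rho\text{ is quasi-convex and law invariant}\}$ (with $\mathrm{ES}_\Lambda$ restricted to $\underline{L}^1$). Here "min" means that $\mathrm{ES}_\Lambda$ belongs to the set and is pointwise $\le$ every element of it. Moreover, for every decreasing $\Lambda:\mathbb{R}\to[0,1]$, $$\mathrm{ES}_\Lambda(X)=\inf_{x\in\mathbb{R}}\left(\mathrm{ES}_{\Lambda(x)}(X)\vee x\right),\quad X\in L^1.$$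
   Context: $(\Omega,\mathcal F,\mathbb P)$ is an atomless probability space, $L^0$ all random variables, $L^1$ integrable ones, $\underline{L}^1$ the elements of $L^1$ essentially bounded from below; $\overline{\mathbb{R}}=[-\infty,\infty]$; "decreasing" is weak; $\wedge=\min$, $\vee=\max$. For $\alpha\in[0,1]$, $X\in L^0$: $\mathrm{VaR}_\alpha(X)=\inf\{x\in\mathbb{R}:\mathbb P(X\le x)\ge\alpha\}$, $\mathrm{VaR}^+_\alpha(X)=\inf\{x\in\mathbb{R}:\mathbb P(X\le x)>\alpha\}$. For $X\in L^1$: $\mathrm{ES}_\alpha(X)=\frac{1}{1-\alpha}\int_\alpha^1\mathrm{VaR}_\beta(X)\,\mathrm d\beta$ for $\alpha<1$, $\mathrm{ES}_1(X)=\mathrm{VaR}_1(X)$. For decreasing $\Lambda:\mathbb{R}\to[0,1]$: $\mathrm{VaR}_\Lambda(X)=\inf\{x\in\mathbb{R}:\mathbb P(X\le x)\ge\Lambda(x)\}$, $\mathrm{VaR}^+_\Lambda(X)=\inf\{x\in\mathbb{R}:\mathbb P(X\le x)>\Lambda(x)\}$, $\mathrm{ES}_\Lambda(X)=\sup_{x\in\mathbb{R}}\left(\mathrm{ES}_{\Lambda(x)}(X)\wedge x\right)$, $X\in L^1$. Quasi-convex: $\rho(\gamma X+(1-\gamma)Y)\le\max\{\rho(X),\rho(Y)\}$; law invariant: $\rho(X)=\rho(Y)$ for equally distributed $X,Y$. *)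

theory Defs
  imports "HOL-Probability.Probability"
begin

definition atomless :: "'a measure \<Rightarrow> bool" where
  "atomless M \<longleftrightarrow> (\<forall>A\<in>sets M. 0 < measure M A \<longrightarrow>
     (\<exists>B\<in>sets M. B \<subseteq> A \<and> 0 < measure M B \<and> measure M B < measure M A))"

definition cdf_rv :: "'a measure \<Rightarrow> ('a \<Rightarrow> real) \<Rightarrow> real \<Rightarrow> real" where
  "cdf_rv M X x = measure M {\<omega> \<in> space M. X \<omega> \<le> x}"

definition L1 :: "'a measure \<Rightarrow> ('a \<Rightarrow> real) set" where
  "L1 M = {X. integrable M X}"

definition L1_bdd_below :: "'a measure \<Rightarrow> ('a \<Rightarrow> real) set" where
  "L1_bdd_below M = {X. integrable M X \<and> (\<exists>c. AE \<omega> in M. c \<le> X \<omega>)}"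

text \<open>Value-at-Risk (infimum taken in the extended reals; inf of empty set is +infinity).\<close>
definition VaR :: "'a measure \<Rightarrow> real \<Rightarrow> ('a \<Rightarrow> real) \<Rightarrow> ereal" where
  "VaR M \<alpha> X = Inf (ereal ` {x. cdf_rv M X x \<ge> \<alpha>})"

definition VaR_plus :: "'a measure \<Rightarrow> real \<Rightarrow> ('a \<Rightarrow> real) \<Rightarrow> ereal" where
  "VaR_plus M \<alpha> X = Inf (ereal ` {x. cdf_rv M X x > \<alpha>})"

definition ES :: "'a measure \<Rightarrow> real \<Rightarrow> ('a \<Rightarrow> real) \<Rightarrow> ereal" where
  "ES M \<alpha> X = (if \<alpha> < 1
      then ereal (1 / (1 - \<alpha>) * (LINT \<beta>:{\<alpha><..<1}|lborel. real_of_ereal (VaR M \<beta> X)))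
      else VaR M 1 X)"

definition VaR_Lambda :: "'a measure \<Rightarrow> (real \<Rightarrow> real) \<Rightarrow> ('a \<Rightarrow> real) \<Rightarrow> ereal" where
  "VaR_Lambda M \<Lambda> X = Inf (ereal ` {x. cdf_rv M X x \<ge> \<Lambda> x})"

definition VaR_plus_Lambda :: "'a measure \<Rightarrow> (real \<Rightarrow> real) \<Rightarrow> ('a \<Rightarrow> real) \<Rightarrow> ereal" where
  "VaR_plus_Lambda M \<Lambda> X = Inf (ereal ` {x. cdf_rv M X x > \<Lambda> x})"

definition ES_Lambda :: "'a measure \<Rightarrow> (real \<Rightarrow> real) \<Rightarrow> ('a \<Rightarrow> real) \<Rightarrow> ereal" where
  "ES_Lambda M \<Lambda> X = (SUP x::real. min (ES M (\<Lambda> x) X) (ereal x))"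

definition quasi_convex_on :: "('a \<Rightarrow> real) set \<Rightarrow> (('a \<Rightarrow> real) \<Rightarrow> ereal) \<Rightarrow> bool" where
  "quasi_convex_on D \<rho> \<longleftrightarrow> (\<forall>X\<in>D. \<forall>Y\<in>D. \<forall>\<gamma>\<in>{0..1::real}.
      \<rho> (\<lambda>\<omega>. \<gamma> * X \<omega> + (1 - \<gamma>) * Y \<omega>) \<le> max (\<rho> X) (\<rho> Y))"

definition law_invariant_on :: "'a measure \<Rightarrow> ('a \<Rightarrow> real) set \<Rightarrow> (('a \<Rightarrow> real) \<Rightarrow> ereal) \<Rightarrow> bool" where
  "law_invariant_on M D \<rho> \<longleftrightarrow> (\<forall>X\<in>D. \<forall>Y\<in>D.
      distr M borel X = distr M borel Y \<longrightarrow> \<rho> X = \<rho> Y)"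

definition is_min_qc_li_above :: "'a measure \<Rightarrow> ('a \<Rightarrow> real) set \<Rightarrow> (('a \<Rightarrow> real) \<Rightarrow> ereal)
    \<Rightarrow> (('a \<Rightarrow> real) \<Rightarrow> ereal) \<Rightarrow> bool" where
  "is_min_qc_li_above M D V \<rho> \<longleftrightarrow>
     ((\<forall>X\<in>D. V X \<le> \<rho> X) \<and> quasi_convex_on D \<rho> \<and> law_invariant_on M D \<rho>) \<and>
     (\<forall>\<rho>'. (\<forall>X\<in>D. V X \<le> \<rho>' X) \<and> quasi_convex_on D \<rho>' \<and> law_invariant_on M D \<rho>'
        \<longrightarrow> (\<forall>X\<in>D. \<rho> X \<le> \<rho>' X))"

end

theory Submission
  imports Defs
begin


lemma atomless_halve_step:
  assumes P: "prob_space M" and al: "atomless M" and S: "S \<in> sets M" and pos: "0 < measure M S"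
  shows "\<exists>B\<in>sets M. B \<subseteq> S \<and> 0 < measure M B \<and> measure M B \<le> measure M S / 2"
proof -
  interpret prob_space M by (fact P)
  obtain B where B: "B \<in> sets M" "B \<subseteq> S" "0 < measure M B" "measure M B < measure M S"
    using al S pos unfolding atomless_def by blast
  have d: "measure M (S - B) = measure M S - measure M B"
    using B S by (simp add: finite_measure_Diff)
  show ?thesis
  proof (cases "measure M B \<le> measure M S / 2")
    case True then show ?thesis using B by blast
  next
    case False
    then show ?thesis using B S d by (intro bexI[of _ "S - B"]) auto
  qed
qed

lemma atomless_small:
  assumes P: "prob_space M" and al: "atomless M" and A: "A \<in> sets M" and pos: "0 < measure M A"
    and e: "0 < e"
  shows "\<exists>B\<in>sets M. B \<subseteq> A \<and> 0 < measure M B \<and> measure M B < e"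
proof -
  interpret prob_space M by (fact P)
  have "\<forall>S. \<exists>B. S \<in> sets M \<and> 0 < measure M S \<longrightarrow>
      B \<in> sets M \<and> B \<subseteq> S \<and> 0 < measure M B \<and> measure M B \<le> measure M S / 2"
    using atomless_halve_step[OF P al] by metis
  then obtain f where f: "\<And>S. S \<in> sets M \<Longrightarrow> 0 < measure M S \<Longrightarrow>
      f S \<in> sets M \<and> f S \<subseteq> S \<and> 0 < measure M (f S) \<and> measure M (f S) \<le> measure M S / 2"
    by metis
  have I: "(f ^^ k) A \<in> sets M \<and> (f ^^ k) A \<subseteq> A \<and> 0 < measure M ((f ^^ k) A)
      \<and> measure M ((f ^^ k) A) \<le> measure M A / 2 ^ k" for k
  proof (induction k)
    case 0 then show ?case using A pos by simp
  next
    case (Suc k)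
    then have h: "(f ^^ k) A \<in> sets M" "(f ^^ k) A \<subseteq> A" "0 < measure M ((f ^^ k) A)"
      "measure M ((f ^^ k) A) \<le> measure M A / 2 ^ k" by auto
    note fh = f[OF h(1,3)]
    have "measure M (f ((f ^^ k) A)) \<le> measure M ((f ^^ k) A) / 2" using fh by simp
    also have "\<dots> \<le> measure M A / 2 ^ k / 2" using h(4) by (simp add: divide_right_mono)
    finally show ?case using fh h by (auto simp: field_simps)
  qed
  obtain k where k: "1 / e < 2 ^ k" using real_arch_pow[of 2 "1/e"] by auto
  have "measure M A / 2 ^ k \<le> 1 / 2 ^ k"
    by (simp add: divide_right_mono)
  also have "\<dots> < e" using k e by (simp add: field_simps)
  finally show ?thesis using I[of k] by (intro bexI[of _ "(f ^^ k) A"]) auto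
qed

lemma sierpinski:
  assumes P: "prob_space M" and al: "atomless M" and A: "A \<in> sets M"
    and c0: "0 \<le> c" and cA: "c \<le> measure M A"
  shows "\<exists>B\<in>sets M. B \<subseteq> A \<and> measure M B = c"
proof -
  interpret prob_space M by (fact P)
  define s where "s C = Sup {measure M D | D. D \<in> sets M \<and> D \<subseteq> A - C \<and> measure M C + measure M D \<le> c}" for C
  have sne: "{measure M D | D. D \<in> sets M \<and> D \<subseteq> A - C \<and> measure M C + measure M D \<le> c} \<noteq> {}"
    if "measure M C \<le> c" for C using that by (intro ex_in_conv[THEN iffD1]) (auto intro!: exI[of _ "{}"])
  have sbdd: "bdd_above {measure M D | D. D \<in> sets M \<and> D \<subseteq> A - C \<and> measure M C + measure M D \<le> c}" for C
    by (rule bdd_aboveI[of _ 1]) auto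
  have ex: "\<exists>D. D \<in> sets M \<and> D \<subseteq> A - C \<and> measure M C + measure M D \<le> c \<and> s C / 2 \<le> measure M D"
    if Cc: "measure M C \<le> c" for C
  proof (cases "s C \<le> 0")
    case True then show ?thesis using Cc by (intro exI[of _ "{}"]) auto
  next
    case False
    then have "s C / 2 < s C" by simp
    then obtain x where "x \<in> {measure M D | D. D \<in> sets M \<and> D \<subseteq> A - C \<and> measure M C + measure M D \<le> c}"
      "s C / 2 < x"
      using less_cSup_iff[OF sne[OF Cc] sbdd] unfolding s_def by blast
    then show ?thesis by force
  qed
  then obtain f where f: "\<And>C. measure M C \<le> c \<Longrightarrow> f C \<in> sets M \<and> f C \<subseteq> A - C \<and>
      measure M C + measure M (f C) \<le> c \<and> s C / 2 \<le> measure M (f C)"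
    by metis
  define Cs where "Cs k = ((\<lambda>C. C \<union> f C) ^^ k) {}" for k
  have Cs_Suc: "Cs (Suc k) = Cs k \<union> f (Cs k)" for k by (simp add: Cs_def)
  have I: "Cs k \<in> sets M \<and> Cs k \<subseteq> A \<and> measure M (Cs k) \<le> c" for k
  proof (induction k)
    case 0 then show ?case using c0 by (simp add: Cs_def)
  next
    case (Suc k)
    then have h: "Cs k \<in> sets M" "Cs k \<subseteq> A" "measure M (Cs k) \<le> c" by auto
    note fk = f[OF h(3)]
    have "measure M (Cs k \<union> f (Cs k)) = measure M (Cs k) + measure M (f (Cs k))"
      using fk h by (intro finite_measure_Union) auto
    then show ?case using fk h unfolding Cs_Suc by auto
  qed
  have meas_Suc: "measure M (Cs (Suc k)) = measure M (Cs k) + measure M (f (Cs k))" for k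
    using f[of "Cs k"] I[of k] unfolding Cs_Suc by (intro finite_measure_Union) auto
  have inc: "incseq Cs" by (rule incseq_SucI) (simp add: Cs_Suc)
  define C where "C = (\<Union>k. Cs k)"
  have Cs: "C \<in> sets M" "C \<subseteq> A" using I unfolding C_def by auto
  have lim: "(\<lambda>k. measure M (Cs k)) \<longlonglongrightarrow> measure M C"
    unfolding C_def using I inc by (intro finite_Lim_measure_incseq) auto
  have Cc: "measure M C \<le> c"
    by (rule LIMSEQ_le_const2[OF lim]) (use I in auto)
  have "measure M C = c"
  proof (rule ccontr)
    assume "measure M C \<noteq> c"
    then have lt: "measure M C < c" using Cc by simp
    have "measure M (A - C) = measure M A - measure M C"
      using Cs A by (simp add: finite_measure_Diff)
    then have "0 < measure M (A - C)" using lt cA by simp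
    then obtain D where D: "D \<in> sets M" "D \<subseteq> A - C" "0 < measure M D" "measure M D < c - measure M C"
      using atomless_small[OF P al, of "A - C" "c - measure M C"] Cs A lt by auto
    have CsC: "measure M (Cs k) \<le> measure M C" for k
      using I Cs unfolding C_def by (intro finite_measure_mono) auto
    have "measure M D \<le> s (Cs k)" for k
      unfolding s_def
    proof (rule cSup_upper[OF _ sbdd])
      have "D \<subseteq> A - Cs k" using D unfolding C_def by auto
      moreover have "measure M (Cs k) + measure M D \<le> c" using CsC[of k] D by simp
      ultimately show "measure M D \<in> {measure M Da |Da. Da \<in> sets M \<and> Da \<subseteq> A - Cs k \<and> measure M (Cs k) + measure M Da \<le> c}"
        using D by blast
    qed
    then have step: "measure M D / 2 \<le> measure M (f (Cs k))" for k
      using f[of "Cs k"] I[of k] by (meson divide_right_mono order_trans zero_le_numeral)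
    have grow: "real k * (measure M D / 2) \<le> measure M (Cs k)" for k
    proof (induction k)
      case 0 then show ?case by (simp add: Cs_def)
    next
      case (Suc k) then show ?case using step[of k] meas_Suc[of k] by (simp add: distrib_right)
    qed
    obtain k where k: "2 / measure M D < real k" using reals_Archimedean2 by blast
    then have "1 < real k * (measure M D / 2)" using D by (simp add: field_simps)
    moreover have "measure M (Cs k) \<le> 1" by simp
    ultimately show False using grow[of k] by simp
  qed
  then show ?thesis using Cs by blast
qed



definition Unif :: "real measure" where
  "Unif = density lborel (indicator {0<..<1})"

lemma sets_Unif[simp, measurable_cong]: "sets Unif = sets borel"
  by (simp add: Unif_def)

lemma space_Unif[simp]: "space Unif = UNIV"
  by (simp add: Unif_def)

lemma emeasure_Unif: "S \<in> sets borel \<Longrightarrow> emeasure Unif S = emeasure lborel ({0<..<1} \<inter> S)"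
  unfolding Unif_def by (subst emeasure_restricted) auto

lemma measure_Unif: "S \<in> sets borel \<Longrightarrow> measure Unif S = measure lborel ({0<..<1} \<inter> S)"
  unfolding measure_def by (simp add: emeasure_Unif)

lemma prob_space_Unif: "prob_space Unif"
  by (rule prob_spaceI) (simp add: emeasure_Unif)

lemma real_distribution_Unif: "real_distribution Unif"
  unfolding real_distribution_def real_distribution_axioms_def using prob_space_Unif by simp

lemma measure_lborel_Ioo01_atMost:
  "measure lborel ({0<..<1::real} \<inter> {..u}) = max 0 (min 1 u)"
proof -
  consider "u \<le> 0" | "0 < u" "u < 1" | "1 \<le> u" by linarith
  then show ?thesis
  proof cases
    case 1
    then have "{0<..<1::real} \<inter> {..u} = {}" by auto
    then show ?thesis using 1 by simp
  next
    case 2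
    then have "{0<..<1::real} \<inter> {..u} = {0<..u}" by auto
    then show ?thesis using 2 by simp
  next
    case 3
    then have "{0<..<1::real} \<inter> {..u} = {0<..<1}" by auto
    then show ?thesis using 3 by simp
  qed
qed

lemma cdf_Unif: "cdf Unif u = max 0 (min 1 u)"
  unfolding cdf_def by (simp add: measure_Unif measure_lborel_Ioo01_atMost)

lemma Unif_eqI:
  assumes "real_distribution N" "\<And>u. measure N {..u} = max 0 (min 1 u)"
  shows "N = Unif"
proof (rule cdf_unique[OF assms(1) real_distribution_Unif], rule ext)
  fix u show "cdf N u = cdf Unif u" unfolding cdf_Unif by (simp add: cdf_def assms(2))
qed

locale atomless_ps = prob_space M for M :: "'a measure" +
  assumes al: "atomless M"
begin

definition half :: "'a set \<Rightarrow> 'a set" where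
  "half S = (SOME B. B \<in> sets M \<and> B \<subseteq> S \<and> measure M B = measure M S / 2)"

lemma half: assumes "S \<in> sets M"
  shows "half S \<in> sets M" "half S \<subseteq> S" "measure M (half S) = measure M S / 2"
proof -
  have "\<exists>B. B \<in> sets M \<and> B \<subseteq> S \<and> measure M B = measure M S / 2"
    using sierpinski[OF prob_space_axioms al assms, of "measure M S / 2"] by auto
  then have "half S \<in> sets M \<and> half S \<subseteq> S \<and> measure M (half S) = measure M S / 2"
    unfolding half_def by (rule someI_ex)
  then show "half S \<in> sets M" "half S \<subseteq> S" "measure M (half S) = measure M S / 2" by auto
qed

primrec G :: "nat \<Rightarrow> nat \<Rightarrow> 'a set" where
  "G 0 = (\<lambda>j. if j = 0 then {} else space M)"
| "G (Suc n) = (\<lambda>j. if even j then G n (j div 2)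
      else G n (j div 2) \<union> half (G n (j div 2 + 1) - G n (j div 2)))"

lemma G_sets: "G n j \<in> sets M"
proof (induction n arbitrary: j)
  case 0 then show ?case by simp
next
  case (Suc n) then show ?case using half(1) by auto
qed

lemma G_Suc_mono: "G n j \<subseteq> G n (Suc j)"
proof (induction n arbitrary: j)
  case 0 then show ?case by auto
next
  case (Suc n)
  show ?case
  proof (cases "even j")
    case True
    then have "Suc j div 2 = j div 2" by presburger
    then show ?thesis using True by auto
  next
    case False
    then have e: "even (Suc j)" "Suc j div 2 = j div 2 + 1" by presburger+
    have "half (G n (j div 2 + 1) - G n (j div 2)) \<subseteq> G n (j div 2 + 1)"
      using half(2)[of "G n (j div 2 + 1) - G n (j div 2)"] G_sets by auto
    then show ?thesis using False e Suc[of "j div 2"] by auto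
  qed
qed

lemma G_mono: "j \<le> k \<Longrightarrow> G n j \<subseteq> G n k"
  using lift_Suc_mono_le[of "G n", OF G_Suc_mono] by blast

lemma G_top: "2 ^ n \<le> j \<Longrightarrow> G n j = space M"
proof (induction n arbitrary: j)
  case 0 then show ?case by auto
next
  case (Suc n)
  have "2 ^ Suc n div 2 \<le> j div 2" by (rule div_le_mono[OF Suc.prems])
  then have j2: "2 ^ n \<le> j div 2" by simp
  show ?case
  proof (cases "even j")
    case True then show ?thesis using Suc.IH[OF j2] by simp
  next
    case False
    have "G n (j div 2 + 1) = space M" using Suc.IH j2 by simp
    then have "half (G n (j div 2 + 1) - G n (j div 2)) \<subseteq> space M"
      using half(2)[of "G n (j div 2 + 1) - G n (j div 2)"] G_sets by auto
    then show ?thesis using False Suc.IH[OF j2] by auto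
  qed
qed

lemma G_measure: "j \<le> 2 ^ n \<Longrightarrow> measure M (G n j) = real j / 2 ^ n"
proof (induction n arbitrary: j)
  case 0 then show ?case using prob_space by (cases "j = 0") (auto simp: le_Suc_eq)
next
  case (Suc n)
  show ?case
  proof (cases "even j")
    case True
    then have "j div 2 \<le> 2 ^ n" using Suc.prems by auto
    then show ?thesis using True Suc.IH[of "j div 2"] by (auto elim!: evenE)
  next
    case False
    then obtain i where i: "j = 2 * i + 1" by (auto elim!: oddE)
    then have ji: "j div 2 = i" by simp
    have ilt: "i + 1 \<le> 2 ^ n" using Suc.prems i by simp
    define D where "D = G n (i + 1) - G n i"
    have Ds: "D \<in> sets M" unfolding D_def using G_sets by auto
    have sub: "G n i \<subseteq> G n (i + 1)" by (rule G_mono) simp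
    have mD: "measure M D = real (i + 1) / 2 ^ n - real i / 2 ^ n"
      unfolding D_def using sub G_sets Suc.IH[of "i+1"] Suc.IH[of i] ilt
      by (simp add: finite_measure_Diff)
    have disj: "G n i \<inter> half D = {}" using half(2)[OF Ds] unfolding D_def by auto
    have "measure M (G n i \<union> half D) = measure M (G n i) + measure M (half D)"
      using disj G_sets half(1)[OF Ds] by (intro finite_measure_Union) auto
    also have "\<dots> = real i / 2 ^ n + (real (i + 1) / 2 ^ n - real i / 2 ^ n) / 2"
      using Suc.IH[of i] ilt half(3)[OF Ds] mD by simp
    also have "\<dots> = real j / 2 ^ Suc n" using i by (simp add: field_simps)
    finally show ?thesis using False ji unfolding D_def by simp
  qed
qed

lemma G_measure_le: "measure M (G n j) \<le> real j / 2 ^ n"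
proof (cases "j \<le> 2 ^ n")
  case True then show ?thesis by (simp add: G_measure)
next
  case False
  then have "1 \<le> real j / 2 ^ n" by (simp add: field_simps)
  then show ?thesis using G_top[of n j] False prob_space by simp
qed

lemma G_scale: "G (n + d) (j * 2 ^ d) = G n j"
proof (induction d)
  case 0 then show ?case by simp
next
  case (Suc d)
  have e: "even (j * 2 ^ Suc d)" by simp
  have d: "j * 2 ^ Suc d div 2 = j * 2 ^ d" by simp
  have "G (n + Suc d) (j * 2 ^ Suc d) = G (Suc (n + d)) (j * 2 ^ Suc d)" by simp
  also have "\<dots> = G (n + d) (j * 2 ^ Suc d div 2)" using e by (simp only: G.simps if_True)
  also have "\<dots> = G n j" using d Suc by simp
  finally show ?case .
qed

lemma G_dyadic_mono:
  assumes "real j / 2 ^ n \<le> real k / 2 ^ m"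
  shows "G n j \<subseteq> G m k"
proof -
  have "real j * 2 ^ m \<le> real k * 2 ^ n" using assms by (simp add: field_simps)
  then have "real (j * 2 ^ m) \<le> real (k * 2 ^ n)" by simp
  then have le: "j * 2 ^ m \<le> k * 2 ^ n" by (simp only: of_nat_le_iff)
  have "G n j = G (n + m) (j * 2 ^ m)" by (simp add: G_scale)
  also have "\<dots> \<subseteq> G (n + m) (k * 2 ^ n)" by (rule G_mono[OF le])
  also have "\<dots> = G m k" using G_scale[of m n k] by (simp add: add.commute)
  finally show ?thesis .
qed

definition V :: "'a \<Rightarrow> real" where
  "V w = Inf {real j / 2 ^ n | n j. w \<in> G n j}"

lemma V_set_bdd: "bdd_below {real j / 2 ^ n | n j. w \<in> G n j}"
  by (rule bdd_belowI[of _ 0]) auto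

lemma V_set_ne: "w \<in> space M \<Longrightarrow> 1 \<in> {real j / 2 ^ n | n j. w \<in> G n j}"
  by (rule CollectI, rule exI[of _ 0], rule exI[of _ 1]) simp

lemma V_le_dyadic: "w \<in> G n j \<Longrightarrow> V w \<le> real j / 2 ^ n"
  unfolding V_def by (rule cInf_lower[OF _ V_set_bdd]) blast

lemma V_nonneg: "w \<in> space M \<Longrightarrow> 0 \<le> V w"
  unfolding V_def by (rule cInf_greatest) (use V_set_ne in blast, auto)

lemma V_le_1: "w \<in> space M \<Longrightarrow> V w \<le> 1"
  using V_le_dyadic[of w 0 1] by simp

lemma V_le_iff:
  assumes w: "w \<in> space M"
  shows "V w \<le> u \<longleftrightarrow> (\<forall>m k. u < real k / 2 ^ m \<longrightarrow> w \<in> G m k)"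
proof
  assume Vu: "V w \<le> u"
  show "\<forall>m k. u < real k / 2 ^ m \<longrightarrow> w \<in> G m k"
  proof (intro allI impI)
    fix m k assume "u < real k / 2 ^ m"
    then have "V w < real k / 2 ^ m" using Vu by simp
    then obtain r where r: "r \<in> {real j / 2 ^ n | n j. w \<in> G n j}" "r < real k / 2 ^ m"
      unfolding V_def using cInf_less_iff[OF _ V_set_bdd] V_set_ne[OF w] by blast
    then obtain n j where nj: "r = real j / 2 ^ n" "w \<in> G n j" by blast
    show "w \<in> G m k" using G_dyadic_mono[of j n k m] nj r by auto
  qed
next
  assume H: "\<forall>m k. u < real k / 2 ^ m \<longrightarrow> w \<in> G m k"
  show "V w \<le> u"
  proof (rule ccontr)
    assume "\<not> V w \<le> u"
    then have lt: "u < V w" by simp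
    show False
    proof (cases "u < 0")
      case True
      then have "w \<in> G 0 0" using H[rule_format, of 0 0] by simp
      then show False by simp
    next
      case False
      obtain m where m: "1 / (V w - u) < 2 ^ m" using real_arch_pow[of 2 "1 / (V w - u)"] by auto
      then have m': "1 / 2 ^ m < V w - u" using lt by (simp add: field_simps)
      define k where "k = nat \<lfloor>u * 2 ^ m\<rfloor> + 1"
      have fl: "real_of_int \<lfloor>u * 2 ^ m\<rfloor> \<le> u * 2 ^ m" "u * 2 ^ m < real_of_int \<lfloor>u * 2 ^ m\<rfloor> + 1"
        by linarith+
      have "0 \<le> \<lfloor>u * 2 ^ m\<rfloor>" using False by simp
      then have kr: "real k = real_of_int \<lfloor>u * 2 ^ m\<rfloor> + 1" unfolding k_def by simp
      have "u < real k / 2 ^ m" using fl kr by (simp add: field_simps)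
      then have "w \<in> G m k" using H by blast
      then have "V w \<le> real k / 2 ^ m" by (rule V_le_dyadic)
      moreover have "real k / 2 ^ m \<le> u + 1 / 2 ^ m" using fl kr by (simp add: field_simps)
      ultimately show False using m' by simp
    qed
  qed
qed

lemma V_le_set:
  "{w \<in> space M. V w \<le> u} = space M \<inter> (\<Inter>p\<in>{p. u < real (snd p) / 2 ^ fst p}. G (fst p) (snd p))"
  using V_le_iff by auto

lemma V_measurable[measurable]: "V \<in> borel_measurable M"
proof (unfold borel_measurable_iff_le, intro allI)
  fix u :: real
  obtain k :: nat where k: "u < real k" using reals_Archimedean2 by blast
  have ne: "{p. u < real (snd p) / 2 ^ fst p} \<noteq> {}"
    using k by (intro ex_in_conv[THEN iffD1] exI[of _ "(0, k)"]) auto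
  have "(\<Inter>p\<in>{p. u < real (snd p) / 2 ^ fst p}. G (fst p) (snd p)) \<in> sets M"
    by (rule sets.countable_INT[OF _ ne]) (auto simp: G_sets)
  then show "{w \<in> space M. V w \<le> u} \<in> sets M" unfolding V_le_set by auto
qed

lemma V_cdf: "measure M {w \<in> space M. V w \<le> u} = max 0 (min 1 u)"
proof -
  consider "u < 0" | "0 \<le> u" "u \<le> 1" | "1 < u" by linarith
  then show ?thesis
  proof cases
    case 1
    then have e: "{w \<in> space M. V w \<le> u} = {}" using V_nonneg by force
    show ?thesis unfolding e using 1 by simp
  next
    case 3
    then have e: "{w \<in> space M. V w \<le> u} = space M" using V_le_1 by force
    show ?thesis unfolding e using 3 by (simp add: prob_space)
  next
    case 2
    let ?P = "measure M {w \<in> space M. V w \<le> u}"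
    have meas: "{w \<in> space M. V w \<le> u} \<in> sets M" by measurable
    have bnd: "\<bar>?P - u\<bar> \<le> 1 / 2 ^ m" for m
    proof -
      define j where "j = nat \<lfloor>u * 2 ^ m\<rfloor>"
      have fl: "real_of_int \<lfloor>u * 2 ^ m\<rfloor> \<le> u * 2 ^ m" "u * 2 ^ m < real_of_int \<lfloor>u * 2 ^ m\<rfloor> + 1"
        by linarith+
      have "0 \<le> \<lfloor>u * 2 ^ m\<rfloor>" using 2 by simp
      then have jr: "real j = real_of_int \<lfloor>u * 2 ^ m\<rfloor>" unfolding j_def by simp
      have ju: "real j / 2 ^ m \<le> u" using fl jr by (simp add: field_simps)
      have "u * 2 ^ m \<le> 2 ^ m" using 2 by simp
      then have "real j \<le> 2 ^ m" using fl jr by linarith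
      then have "real j \<le> real (2 ^ m)" by simp
      then have j2: "j \<le> 2 ^ m" by (simp only: of_nat_le_iff)
      have "G m j \<subseteq> {w \<in> space M. V w \<le> u}"
      proof
        fix w assume w: "w \<in> G m j"
        then have "w \<in> space M" using G_sets[of m j] sets.sets_into_space by blast
        moreover have "V w \<le> u" using V_le_dyadic[OF w] ju by simp
        ultimately show "w \<in> {w \<in> space M. V w \<le> u}" by simp
      qed
      then have lo: "real j / 2 ^ m \<le> ?P"
        using finite_measure_mono[OF _ meas] G_measure[OF j2] by metis
      have uj: "u < real (j + 1) / 2 ^ m" using fl jr by (simp add: field_simps)
      have "{w \<in> space M. V w \<le> u} \<subseteq> G m (j + 1)"
      proof
        fix w assume "w \<in> {w \<in> space M. V w \<le> u}"
        then show "w \<in> G m (j + 1)" using V_le_iff[of w u] uj by blast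
      qed
      then have "?P \<le> measure M (G m (j + 1))"
        using finite_measure_mono[OF _ G_sets] by blast
      then have hi: "?P \<le> real (j + 1) / 2 ^ m"
        using G_measure_le[of m "j+1"] by linarith
      have "u * 2 ^ m - 1 < real j" using fl jr by linarith
      then have "(u * 2 ^ m - 1) / 2 ^ m < real j / 2 ^ m" by (simp add: divide_strict_right_mono)
      moreover have "(u * 2 ^ m - 1) / 2 ^ m = u - 1 / 2 ^ m" by (simp add: field_simps)
      ultimately have l2: "u - 1 / 2 ^ m < real j / 2 ^ m" by simp
      have "real (j + 1) / 2 ^ m = real j / 2 ^ m + 1 / 2 ^ m" by (simp add: field_simps)
      then show ?thesis using lo hi ju l2 by (simp add: abs_le_iff)
    qed
    have "?P = u"
    proof (rule ccontr)
      assume "?P \<noteq> u"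
      then have pos: "0 < \<bar>?P - u\<bar>" by simp
      obtain m where m: "1 / \<bar>?P - u\<bar> < 2 ^ m" using real_arch_pow[of 2 "1 / \<bar>?P - u\<bar>"] by auto
      then have "1 / 2 ^ m < \<bar>?P - u\<bar>" using pos by (simp add: field_simps)
      then show False using bnd[of m] by simp
    qed
    then show ?thesis using 2 by simp
  qed
qed

lemma distr_V: "distr M borel V = Unif"
proof (rule Unif_eqI)
  show "real_distribution (distr M borel V)" by (rule real_distribution_distr) simp
  fix u :: real
  have "measure (distr M borel V) {..u} = measure M (V -` {..u} \<inter> space M)"
    by (rule measure_distr) auto
  also have "V -` {..u} \<inter> space M = {w \<in> space M. V w \<le> u}" by auto
  finally show "measure (distr M borel V) {..u} = max 0 (min 1 u)" by (simp add: V_cdf)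
qed

lemma exists_uniform: "\<exists>V. V \<in> borel_measurable M \<and> distr M borel V = Unif"
  using V_measurable distr_V by blast

end



lemma Unif_alt: "Unif = density lborel (\<lambda>x. ennreal (indicator {0<..<1::real} x))"
  by (simp add: Unif_def ennreal_indicator)

lemma integrable_Unif:
  fixes f :: "real \<Rightarrow> real"
  assumes [measurable]: "f \<in> borel_measurable borel"
  shows "integrable Unif f \<longleftrightarrow> set_integrable lborel {0<..<1} f"
  unfolding Unif_alt set_integrable_def
  by (subst integrable_density) auto

lemma integral_Unif:
  fixes f :: "real \<Rightarrow> real"
  assumes [measurable]: "f \<in> borel_measurable borel"
  shows "integral\<^sup>L Unif f = (LINT x:{0<..<1}|lborel. f x)"
  unfolding Unif_alt set_lebesgue_integral_def
  by (subst integral_density) auto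

locale rvar = prob_space M for M :: "'a measure" +
  fixes X :: "'a \<Rightarrow> real"
  assumes X_meas[measurable]: "X \<in> borel_measurable M"
begin

abbreviation "F \<equiv> cdf_rv M X"

definition qf :: "real \<Rightarrow> real" where
  "qf b = Inf {x. b \<le> F x}"

lemma F_eq_cdf: "F x = cdf (distr M borel X) x"
  unfolding cdf_rv_def cdf_def
  by (subst measure_distr) (auto intro!: arg_cong[where f="measure M"])

lemma rd: "real_distribution (distr M borel X)" by simp

lemma F_mono: "x \<le> y \<Longrightarrow> F x \<le> F y"
  unfolding F_eq_cdf by (rule finite_borel_measure.cdf_nondecreasing[OF real_distribution.finite_borel_measure_M[OF rd]])

lemma F_nonneg: "0 \<le> F x"
  unfolding cdf_rv_def by simp

lemma F_le1: "F x \<le> 1"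
  unfolding cdf_rv_def by simp

lemma F_top: "(F \<longlongrightarrow> 1) at_top"
  unfolding F_eq_cdf[abs_def] by (rule real_distribution.cdf_lim_at_top_prob[OF rd])

lemma F_bot: "(F \<longlongrightarrow> 0) at_bot"
  unfolding F_eq_cdf[abs_def] by (rule finite_borel_measure.cdf_lim_at_bot[OF real_distribution.finite_borel_measure_M[OF rd]])

lemma F_rcont: "continuous (at_right a) F"
  unfolding F_eq_cdf[abs_def] by (rule finite_borel_measure.cdf_is_right_cont[OF real_distribution.finite_borel_measure_M[OF rd]])

lemma S_ne: assumes "b < 1" shows "{x. b \<le> F x} \<noteq> {}"
proof -
  have "eventually (\<lambda>x. b < F x) at_top" using order_tendstoD(1)[OF F_top assms] .
  then obtain N where "\<forall>n\<ge>N. b < F n" unfolding eventually_at_top_linorder by blast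
  then have "b < F N" by blast
  then have "N \<in> {x. b \<le> F x}" by simp
  then show ?thesis by blast
qed

lemma S_bdd: assumes "0 < b" shows "bdd_below {x. b \<le> F x}"
proof -
  have "eventually (\<lambda>x. F x < b) at_bot" using order_tendstoD(2)[OF F_bot assms] .
  then obtain x0 where "\<forall>x\<le>x0. F x < b" unfolding eventually_at_bot_linorder by blast
  then have x0: "\<And>x. x \<le> x0 \<Longrightarrow> F x < b" by blast
  show ?thesis
  proof (rule bdd_belowI[of _ x0])
    fix x assume "x \<in> {x. b \<le> F x}"
    then show "x0 \<le> x" using x0[of x] by force
  qed
qed

lemma F_qf: assumes b: "0 < b" "b < 1" shows "b \<le> F (qf b)"
proof -
  have ev: "eventually (\<lambda>y. b \<le> F y) (at_right (qf b))"
  proof -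
    have hb: "b \<le> F y" if yq: "qf b < y" for y
    proof -
      obtain x where "x \<in> {x. b \<le> F x}" "x < y"
        using yq cInf_less_iff[OF S_ne[OF b(2)] S_bdd[OF b(1)]] unfolding qf_def by blast
      then show ?thesis using F_mono[of x y] by simp
    qed
    have "eventually (\<lambda>y. qf b < y) (at_right (qf b))" by (rule eventually_at_right_less)
    then show ?thesis by (rule eventually_mono) (rule hb)
  qed
  have "(F \<longlongrightarrow> F (qf b)) (at_right (qf b))" using F_rcont unfolding continuous_within .
  then show ?thesis by (rule tendsto_lowerbound[OF _ ev]) simp
qed

lemma qf_le_iff: assumes b: "0 < b" "b < 1" shows "qf b \<le> x \<longleftrightarrow> b \<le> F x"
proof
  assume "qf b \<le> x" then show "b \<le> F x" using F_qf[OF b] F_mono by (meson order_trans)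
next
  assume "b \<le> F x" then show "qf b \<le> x" unfolding qf_def by (intro cInf_lower S_bdd b) simp
qed

lemma qf_mono: assumes "0 < b" "b \<le> b'" "b' < 1" shows "qf b \<le> qf b'"
  using qf_le_iff[of b "qf b'"] qf_le_iff[of b' "qf b'"] assms by simp

lemma VaR_eq: assumes b: "0 < b" "b < 1" shows "VaR M b X = ereal (qf b)"
  unfolding VaR_def qf_def by (rule ereal_Inf'[OF S_bdd[OF b(1)] S_ne[OF b(2)], symmetric])

lemma real_VaR: assumes b: "0 < b" "b < 1" shows "real_of_ereal (VaR M b X) = qf b"
  using VaR_eq[OF b] by simp

lemma VaR_plus_le: assumes "0 \<le> b" "b < v" "v < 1" shows "VaR_plus M b X \<le> ereal (qf v)"
proof -
  have "v \<le> F (qf v)" using F_qf assms by simp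
  then have "qf v \<in> {x. b < F x}" using assms by simp
  then show ?thesis unfolding VaR_plus_def by (intro Inf_lower) auto
qed

definition Q :: "real \<Rightarrow> real" where
  "Q v = (if v \<in> {0<..<1} then qf v else 0)"

lemma Q_le_set: "{v. Q v \<le> x} = ({0<..<1} \<inter> {..F x}) \<union> (if 0 \<le> x then - {0<..<1} else {})"
  unfolding Q_def using qf_le_iff by auto

lemma Q_meas[measurable]: "Q \<in> borel_measurable borel"
proof (unfold borel_measurable_iff_le, intro allI)
  fix x
  have "{v. Q v \<le> x} \<in> sets borel" unfolding Q_le_set by auto
  then show "{w \<in> space borel. Q w \<le> x} \<in> sets borel" by simp
qed

lemma distr_Q: "distr Unif borel Q = distr M borel X"
proof (rule cdf_unique)
  show "real_distribution (distr Unif borel Q)"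
    using prob_space.real_distribution_distr[OF prob_space_Unif] by simp
  show "real_distribution (distr M borel X)" by simp
  show "cdf (distr Unif borel Q) = cdf (distr M borel X)"
  proof (rule ext)
    fix x
    have "cdf (distr Unif borel Q) x = measure Unif (Q -` {..x} \<inter> space Unif)"
      unfolding cdf_def by (subst measure_distr) auto
    also have "Q -` {..x} \<inter> space Unif = {v. Q v \<le> x}" by auto
    also have "measure Unif {v. Q v \<le> x} = measure lborel ({0<..<1} \<inter> {v. Q v \<le> x})"
      by (rule measure_Unif) simp
    also have "{0<..<1} \<inter> {v. Q v \<le> x} = {0<..<1} \<inter> {..F x}"
      unfolding Q_le_set by auto
    also have "measure lborel ({0<..<1::real} \<inter> {..F x}) = F x"
      using measure_lborel_Ioo01_atMost[of "F x"] F_nonneg[of x] F_le1[of x] by simp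
    finally show "cdf (distr Unif borel Q) x = cdf (distr M borel X) x" using F_eq_cdf by simp
  qed
qed

lemma integrable_transfer:
  fixes g :: "real \<Rightarrow> real"
  assumes [measurable]: "g \<in> borel_measurable borel"
  shows "integrable M (\<lambda>w. g (X w)) \<longleftrightarrow> set_integrable lborel {0<..<1} (\<lambda>v. g (qf v))"
proof -
  have "integrable M (\<lambda>w. g (X w)) \<longleftrightarrow> integrable (distr M borel X) g"
    by (rule integrable_distr_eq[symmetric]) auto
  also have "\<dots> \<longleftrightarrow> integrable (distr Unif borel Q) g" by (simp add: distr_Q)
  also have "\<dots> \<longleftrightarrow> integrable Unif (\<lambda>v. g (Q v))"
    by (rule integrable_distr_eq) auto
  also have "\<dots> \<longleftrightarrow> set_integrable lborel {0<..<1} (\<lambda>v. g (Q v))"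
    by (rule integrable_Unif) simp
  also have "\<dots> \<longleftrightarrow> set_integrable lborel {0<..<1} (\<lambda>v. g (qf v))"
    unfolding set_integrable_def
    by (intro Bochner_Integration.integrable_cong) (auto simp: Q_def indicator_def)
  finally show ?thesis .
qed

lemma integral_transfer:
  fixes g :: "real \<Rightarrow> real"
  assumes [measurable]: "g \<in> borel_measurable borel"
  shows "(\<integral>w. g (X w) \<partial>M) = (LINT v:{0<..<1}|lborel. g (qf v))"
proof -
  have "(\<integral>w. g (X w) \<partial>M) = integral\<^sup>L (distr M borel X) g"
    by (rule integral_distr[symmetric]) auto
  also have "\<dots> = integral\<^sup>L (distr Unif borel Q) g" by (simp add: distr_Q)
  also have "\<dots> = integral\<^sup>L Unif (\<lambda>v. g (Q v))"
    by (rule integral_distr) auto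
  also have "\<dots> = (LINT v:{0<..<1}|lborel. g (Q v))"
    by (rule integral_Unif) simp
  also have "\<dots> = (LINT v:{0<..<1}|lborel. g (qf v))"
    by (rule set_lebesgue_integral_cong) (auto simp: Q_def)
  finally show ?thesis .
qed

lemma ES_eq:
  assumes "0 \<le> a" "a < 1"
  shows "ES M a X = ereal (1 / (1 - a) * (LINT v:{a<..<1}|lborel. qf v))"
proof -
  have "(LINT v:{a<..<1}|lborel. real_of_ereal (VaR M v X)) = (LINT v:{a<..<1}|lborel. qf v)"
    by (rule set_lebesgue_integral_cong) (use assms real_VaR in auto)
  then show ?thesis unfolding ES_def using assms by simp
qed

end



lemma emeasure_Ioo_fin: "emeasure lborel {a<..<b::real} < \<top>"
  by (cases "a \<le> b") auto

lemma emeasure_Ioc_fin: "emeasure lborel {a<..b::real} < \<top>"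
  by (cases "a \<le> b") auto

lemma set_integrable_const_Ioc: "set_integrable lborel {a<..b::real} (\<lambda>_. c::real)"
  unfolding set_integrable_def by (rule integrable_indicator) (auto simp: emeasure_Ioo_fin emeasure_Ioc_fin)

lemma set_integrable_const_Ioo: "set_integrable lborel {a<..<b::real} (\<lambda>_. c::real)"
  unfolding set_integrable_def by (rule integrable_indicator) (auto simp: emeasure_Ioo_fin emeasure_Ioc_fin)

lemma set_integral_const_Ioo: "a \<le> b \<Longrightarrow> (LINT x:{a<..<b::real}|lborel. c) = (b - a) * c"
  unfolding set_lebesgue_integral_def by simp

lemma set_integral_const_Ioc: "a \<le> b \<Longrightarrow> (LINT x:{a<..b::real}|lborel. c) = (b - a) * c"
  unfolding set_lebesgue_integral_def by simp

locale qmono =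
  fixes q :: "real \<Rightarrow> real"
  assumes qm: "\<And>x y. 0 < x \<Longrightarrow> x \<le> y \<Longrightarrow> y < 1 \<Longrightarrow> q x \<le> q y"
    and qi: "set_integrable lborel {0<..<1} q"
begin

definition I :: "real \<Rightarrow> real" where
  "I a = (LINT v:{a<..<1}|lborel. q v)"

lemma qi_sub: "S \<in> sets borel \<Longrightarrow> S \<subseteq> {0<..<1} \<Longrightarrow> set_integrable lborel S q"
  by (rule set_integrable_subset[OF qi]) auto

lemma I_lower:
  assumes "0 \<le> a" "a < 1" "\<And>v. a < v \<Longrightarrow> v < 1 \<Longrightarrow> r \<le> q v"
  shows "(1 - a) * r \<le> I a"
proof -
  have "(LINT v:{a<..<1}|lborel. r) \<le> I a"
    unfolding I_def
    by (rule set_integral_mono[OF set_integrable_const_Ioo qi_sub]) (use assms in auto)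
  then show ?thesis using assms by (simp add: set_integral_const_Ioo)
qed

lemma I_upper:
  assumes "0 \<le> a" "a < 1" "\<And>v. a < v \<Longrightarrow> v < 1 \<Longrightarrow> q v \<le> r"
  shows "I a \<le> (1 - a) * r"
proof -
  have "I a \<le> (LINT v:{a<..<1}|lborel. r)"
    unfolding I_def
    by (rule set_integral_mono[OF qi_sub set_integrable_const_Ioo]) (use assms in auto)
  then show ?thesis using assms by (simp add: set_integral_const_Ioo)
qed

lemma I_split:
  assumes "0 \<le> a" "a \<le> b" "b < 1"
  shows "I a = (LINT v:{a<..b}|lborel. q v) + I b"
proof -
  have "{a<..<1} = {a<..b} \<union> {b<..<1}" using assms by auto
  then have "I a = (LINT v:({a<..b} \<union> {b<..<1})|lborel. q v)" unfolding I_def by simp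
  also have "\<dots> = (LINT v:{a<..b}|lborel. q v) + (LINT v:{b<..<1}|lborel. q v)"
    by (rule set_integral_Un) (use assms in \<open>auto intro!: qi_sub\<close>)
  finally show ?thesis unfolding I_def .
qed

lemma Ioc_upper:
  assumes "0 \<le> a" "a \<le> b" "b < 1" "\<And>v. a < v \<Longrightarrow> v \<le> b \<Longrightarrow> q v \<le> r"
  shows "(LINT v:{a<..b}|lborel. q v) \<le> (b - a) * r"
proof -
  have "(LINT v:{a<..b}|lborel. q v) \<le> (LINT v:{a<..b}|lborel. r)"
    by (rule set_integral_mono[OF qi_sub set_integrable_const_Ioc]) (use assms in auto)
  then show ?thesis using assms by (simp add: set_integral_const_Ioc)
qed

lemma Ioc_lower:
  assumes "0 \<le> a" "a \<le> b" "b < 1" "\<And>v. a < v \<Longrightarrow> v \<le> b \<Longrightarrow> r \<le> q v"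
  shows "(b - a) * r \<le> (LINT v:{a<..b}|lborel. q v)"
proof -
  have "(LINT v:{a<..b}|lborel. r) \<le> (LINT v:{a<..b}|lborel. q v)"
    by (rule set_integral_mono[OF set_integrable_const_Ioc qi_sub]) (use assms in auto)
  then show ?thesis using assms by (simp add: set_integral_const_Ioc)
qed

lemma ES_mono:
  assumes "0 \<le> a" "a \<le> b" "b < 1"
  shows "I a / (1 - a) \<le> I b / (1 - b)"
proof (cases "a = b")
  case True then show ?thesis by simp
next
  case False
  then have ab: "a < b" using assms by simp
  have b0: "0 < b" using assms ab by simp
  have J: "(LINT v:{a<..b}|lborel. q v) \<le> (b - a) * q b"
    by (rule Ioc_upper) (use assms b0 qm in auto)
  have Ib: "(1 - b) * q b \<le> I b"
    by (rule I_lower) (use assms b0 qm in auto)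
  have qb: "q b \<le> I b / (1 - b)" using Ib assms by (simp add: pos_le_divide_eq mult.commute)
  have "I a \<le> (b - a) * q b + I b" using I_split[OF assms] J by simp
  also have "(b - a) * q b \<le> (b - a) * (I b / (1 - b))"
    using qb ab by (intro mult_left_mono) auto
  finally have 1: "I a \<le> (b - a) * (I b / (1 - b)) + I b" by simp
  have 2: "(b - a) * (I b / (1 - b)) + I b = (1 - a) * (I b / (1 - b))"
    using assms by (simp add: field_simps)
  have "I a \<le> (1 - a) * (I b / (1 - b))" using 1 2 by simp
  then show ?thesis using assms ab by (simp add: pos_divide_le_eq mult.commute)
qed

lemma ES_left:
  assumes a: "0 < a" "a < 1" and t: "t < I a / (1 - a)"
  shows "\<exists>a'. 0 < a' \<and> a' < a \<and> t < I a' / (1 - a')"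
proof -
  define m where "m = q (a / 2)"
  define E where "E = I a / (1 - a)"
  have IE: "I a = (1 - a) * E" unfolding E_def using a by simp
  have Et: "0 < E - t" using t E_def by simp
  define K where "K = max 1 (t - m)"
  have K: "0 < K" "t - m \<le> K" unfolding K_def by auto
  define d where "d = min (a / 2) ((1 - a) * (E - t) / (2 * K))"
  have dpos: "0 < d" unfolding d_def using a Et K by (auto intro!: divide_pos_pos)
  have da: "d \<le> a / 2" unfolding d_def by (rule min.cobounded1)
  have "d \<le> (1 - a) * (E - t) / (2 * K)" unfolding d_def by (rule min.cobounded2)
  then have dd: "d * (2 * K) \<le> (1 - a) * (E - t)" using K by (simp add: pos_le_divide_eq)
  define a' where "a' = a - d"
  have a'1: "0 < a'" "a' < a" "a / 2 \<le> a'" using dpos da a unfolding a'_def by auto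
  have low: "(a - a') * m \<le> (LINT v:{a'<..a}|lborel. q v)"
    by (rule Ioc_lower) (use a a'1 qm m_def in auto)
  have "I a' = (LINT v:{a'<..a}|lborel. q v) + I a" using I_split[of a' a] a a'1 by simp
  then have Ia': "d * m + (1 - a) * E \<le> I a'" using low IE unfolding a'_def by simp
  have "d * (t - m) \<le> d * K"
    using dpos K by (intro mult_left_mono) auto
  moreover have "0 < d * K" using dpos K by simp
  moreover have "d * (2 * K) = 2 * (d * K)" by simp
  ultimately have lt: "d * (t - m) < (1 - a) * (E - t)" using dd by linarith
  have e1: "d * (t - m) = d * t - d * m" by (simp add: algebra_simps)
  have e2: "(1 - a) * (E - t) = (1 - a) * E - (1 - a) * t" by (simp add: algebra_simps)
  have e3: "t * (1 - a') = (1 - a) * t + d * t" unfolding a'_def by (simp add: algebra_simps)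
  have "t * (1 - a') < d * m + (1 - a) * E" using lt e1 e2 e3 by linarith
  then have "t * (1 - a') < I a'" using Ia' by simp
  then have "t < I a' / (1 - a')" using a'1 a by (simp add: pos_less_divide_eq mult.commute)
  then show ?thesis using a'1 by blast
qed

lemma pos_part_integrable: "set_integrable lborel {0<..<1} (\<lambda>v. max 0 (q v - t))"
proof -
  have h1: "set_integrable lborel {0<..<1} (\<lambda>v. q v - t)"
    by (rule set_integral_diff(1)[OF qi set_integrable_const_Ioo])
  have h2: "set_integrable lborel {0<..<1} (\<lambda>v. \<bar>q v - t\<bar>)"
    by (rule set_integrable_abs[OF h1])
  have h3: "set_integrable lborel {0<..<1} (\<lambda>v. (1/2) * ((q v - t) + \<bar>q v - t\<bar>))"
    by (rule set_integrable_mult_right[OF set_integral_add(1)[OF h1 h2]])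
  have "(\<lambda>v. max 0 (q v - t)) = (\<lambda>v. (1/2) * ((q v - t) + \<bar>q v - t\<bar>))"
    by (auto simp: fun_eq_iff max_def)
  then show ?thesis using h3 by simp
qed

lemma RU_le:
  assumes "0 \<le> a" "a < 1"
  shows "I a \<le> (1 - a) * t + (LINT v:{0<..<1}|lborel. max 0 (q v - t))"
proof -
  have ia: "set_integrable lborel {a<..<1} q" by (rule qi_sub) (use assms in auto)
  have "I a = (LINT v:{a<..<1}|lborel. (q v - t)) + (LINT v:{a<..<1}|lborel. t)"
    unfolding I_def
    by (subst set_integral_add(2)[symmetric]) (auto intro!: set_integral_diff ia set_integrable_const_Ioo)
  also have "(LINT v:{a<..<1}|lborel. t) = (1 - a) * t" using assms by (simp add: set_integral_const_Ioo)
  also have "(LINT v:{a<..<1}|lborel. (q v - t)) \<le> (LINT v:{a<..<1}|lborel. max 0 (q v - t))"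
    by (rule set_integral_mono) (use assms in \<open>auto intro!: set_integral_diff ia set_integrable_const_Ioo
        set_integrable_subset[OF pos_part_integrable]\<close>)
  also have "\<dots> \<le> (LINT v:{0<..<1}|lborel. max 0 (q v - t))"
    unfolding set_lebesgue_integral_def
  proof (rule integral_mono)
    have sub: "{a<..<1} \<subseteq> {0<..<1::real}" using assms by auto
    show "integrable lborel (\<lambda>x. indicat_real {a<..<1} x *\<^sub>R max 0 (q x - t))"
      using set_integrable_subset[OF pos_part_integrable _ sub] unfolding set_integrable_def by simp
    show "integrable lborel (\<lambda>x. indicat_real {0<..<1} x *\<^sub>R max 0 (q x - t))"
      using pos_part_integrable unfolding set_integrable_def by simp
  qed (use assms in \<open>auto simp: indicator_def\<close>)
  finally show ?thesis by simp
qed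

end



context qmono
begin

lemma RU_eq:
  assumes a: "0 < a" "a < 1"
  shows "(1 - a) * q a + (LINT v:{0<..<1}|lborel. max 0 (q v - q a)) = I a"
proof -
  let ?f = "\<lambda>v. max 0 (q v - q a)"
  have "{0<..<1} = {0<..a} \<union> {a<..<1::real}" using a by auto
  then have "(LINT v:{0<..<1}|lborel. ?f v) = (LINT v:({0<..a} \<union> {a<..<1})|lborel. ?f v)" by simp
  also have "\<dots> = (LINT v:{0<..a}|lborel. ?f v) + (LINT v:{a<..<1}|lborel. ?f v)"
    by (rule set_integral_Un) (use a in \<open>auto intro!: set_integrable_subset[OF pos_part_integrable]\<close>)
  also have "(LINT v:{0<..a}|lborel. ?f v) = (LINT v:{0<..a}|lborel. 0)"
    by (rule set_lebesgue_integral_cong) (use a qm in auto)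
  also have "(LINT v:{a<..<1}|lborel. ?f v) = (LINT v:{a<..<1}|lborel. q v - q a)"
    by (rule set_lebesgue_integral_cong) (use a qm in auto)
  also have "\<dots> = I a - (LINT v:{a<..<1}|lborel. q a)"
    unfolding I_def by (rule set_integral_diff(2)) (use a in \<open>auto intro!: qi_sub set_integrable_const_Ioo\<close>)
  also have "(LINT v:{a<..<1}|lborel. q a) = (1 - a) * q a" using a by (simp add: set_integral_const_Ioo)
  finally show ?thesis by simp
qed

lemma riemann:
  assumes a: "0 \<le> a" "a < 1" and n: "0 < n" and h: "h = (1 - a) / real n"
  shows "Suc m \<le> n \<Longrightarrow> (LINT v:{a<..a + real m * h}|lborel. q v) \<le> h * (\<Sum>j\<in>{1..m}. q (a + real j * h))"
proof (induction m)
  case 0 then show ?case by (simp add: set_lebesgue_integral_def)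
next
  case (Suc m)
  have hpos: "0 < h" using h a n by simp
  have nh: "real n * h = 1 - a" using h n by simp
  have lt: "a + real (Suc m) * h < 1"
  proof -
    have "real (Suc m) * h \<le> real (n - 1) * h" using Suc.prems hpos by (intro mult_right_mono) auto
    also have "\<dots> = real n * h - h" using n by (simp add: of_nat_diff algebra_simps)
    finally show ?thesis using nh hpos by simp
  qed
  have le1: "a \<le> a + real m * h" "a + real m * h \<le> a + real (Suc m) * h" using hpos by auto
  have un: "{a<..a + real (Suc m) * h} = {a<..a + real m * h} \<union> {a + real m * h<..a + real (Suc m) * h}"
    using le1 by auto
  have "(LINT v:{a<..a + real (Suc m) * h}|lborel. q v)
      = (LINT v:{a<..a + real m * h}|lborel. q v) + (LINT v:{a + real m * h<..a + real (Suc m) * h}|lborel. q v)"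
    unfolding un by (rule set_integral_Un) (use a lt le1 in \<open>auto intro!: qi_sub\<close>)
  also have "(LINT v:{a + real m * h<..a + real (Suc m) * h}|lborel. q v)
      \<le> (a + real (Suc m) * h - (a + real m * h)) * q (a + real (Suc m) * h)"
  proof (rule Ioc_upper)
    fix v assume v: "a + real m * h < v" "v \<le> a + real (Suc m) * h"
    show "q v \<le> q (a + real (Suc m) * h)" by (rule qm) (use v a le1 lt in linarith)+
  qed (use a lt le1 in auto)
  also have "a + real (Suc m) * h - (a + real m * h) = h" by (simp add: algebra_simps)
  also have "(LINT v:{a<..a + real m * h}|lborel. q v) \<le> h * (\<Sum>j\<in>{1..m}. q (a + real j * h))"
    using Suc by simp
  finally show ?case by (simp add: algebra_simps)
qed

lemma I_limit:
  assumes a: "0 \<le> a" "a < 1"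
  shows "(\<lambda>i. LINT v:{a<..1 - (1 - a) / real (Suc i)}|lborel. q v) \<longlonglongrightarrow> I a"
proof -
  define A where "A i = {a<..1 - (1 - a) / real (Suc i)}" for i
  have inc: "incseq A" unfolding A_def
  proof (rule incseq_SucI, rule subsetI)
    fix i x assume "x \<in> {a<..1 - (1 - a) / real (Suc i)}"
    moreover have "(1 - a) / real (Suc (Suc i)) \<le> (1 - a) / real (Suc i)"
      using a by (intro divide_left_mono) auto
    ultimately show "x \<in> {a<..1 - (1 - a) / real (Suc (Suc i))}" by auto
  qed
  have U1: "A i \<subseteq> {a<..<1}" for i
  proof -
    have "0 < (1 - a) / real (Suc i)" using a by simp
    then show ?thesis unfolding A_def by auto
  qed
  have U2: "{a<..<1} \<subseteq> (\<Union>i. A i)"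
  proof
    fix x assume "x \<in> {a<..<1}"
    then have x: "a < x" "x < 1" by auto
    obtain k where k: "(1 - a) / (1 - x) < real k" using reals_Archimedean2 by blast
    then have i: "(1 - a) / (1 - x) < real (Suc k)" by simp
    then have "(1 - a) / real (Suc k) < 1 - x" using x by (simp add: field_simps)
    then have "x \<in> A k" unfolding A_def using x by auto
    then show "x \<in> (\<Union>i. A i)" by blast
  qed
  have U: "(\<Union>i. A i) = {a<..<1}" using U1 U2 by blast
  have "(\<lambda>i. LINT v:(A i)|lborel. q v) \<longlonglongrightarrow> (LINT v:(\<Union>i. A i)|lborel. q v)"
  proof (rule set_integral_cont_up[OF _ inc])
    show "A i \<in> sets lborel" for i unfolding A_def by simp
    show "set_integrable lborel (\<Union>i. A i) q" unfolding U by (rule qi_sub) (use a in auto)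
  qed
  then have "(\<lambda>i. LINT v:(A i)|lborel. q v) \<longlonglongrightarrow> I a" unfolding U I_def .
  then show ?thesis unfolding A_def .
qed

end



lemma Ico_atMost_measure:
  assumes "l \<le> u"
  shows "measure lborel ({l..<u} \<inter> {..y}) = max 0 (min u y - l)"
proof -
  consider "y < l" | "l \<le> y" "y < u" | "u \<le> y" by linarith
  then show ?thesis
  proof cases
    case 1
    then have "{l..<u} \<inter> {..y} = {}" by auto
    then show ?thesis using 1 assms by simp
  next
    case 2
    then have "{l..<u} \<inter> {..y} = {l..y}" by auto
    then show ?thesis using 2 assms by simp
  next
    case 3
    then have "{l..<u} \<inter> {..y} = {l..<u}" by auto
    then show ?thesis using 3 assms by simp
  qed
qed

lemma measure_Unif': assumes "S \<in> sets borel" shows "measure Unif S = measure lborel ({0..<1} \<inter> S)"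
proof -
  have "{0..<1} \<inter> S = ({0<..<1} \<inter> S) \<union> ({0} \<inter> S)" by auto
  moreover have "{0} \<inter> S \<in> null_sets lborel"
    by (rule null_sets_subset[of "{0}"]) (use assms in auto)
  ultimately have "measure lborel ({0..<1} \<inter> S) = measure lborel ({0<..<1} \<inter> S)"
    using assms by (simp add: measure_Un_null_set)
  then show ?thesis using measure_Unif[OF assms] by simp
qed

lemma fin_sub:
  assumes "A \<subseteq> {l..<u::real}" shows "emeasure lborel A \<noteq> \<infinity>"
proof -
  have "emeasure lborel A \<le> emeasure lborel {l..<u}" by (rule emeasure_mono) (use assms in auto)
  moreover have "emeasure lborel {l..<u} < \<infinity>" by (cases "l \<le> u") auto
  ultimately have "emeasure lborel A < \<infinity>" by (rule le_less_trans)
  then show ?thesis by simp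
qed

definition shm :: "real \<Rightarrow> real \<Rightarrow> real \<Rightarrow> real" where
  "shm a d v = (if v < a then v else if v < 1 - d then v + d else v + d - (1 - a))"

lemma shm_meas[measurable]: "shm a d \<in> borel_measurable borel"
  unfolding shm_def by measurable

lemma shm_set:
  assumes "0 \<le> a" "a < 1" "0 \<le> d" "d < 1 - a"
  shows "{0..<1} \<inter> {v. shm a d v \<le> x} =
    (({0..<a} \<inter> {..x}) \<union> ({a..<1-d} \<inter> {..x-d})) \<union> ({1-d..<1} \<inter> {..x-d+(1-a)})"
  using assms unfolding shm_def by (auto split: if_splits)

lemma shm_preserves:
  assumes a: "0 \<le> a" "a < 1" and d: "0 \<le> d" "d < 1 - a"
  shows "distr Unif borel (shm a d) = Unif"
proof (rule Unif_eqI)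
  show "real_distribution (distr Unif borel (shm a d))"
    using prob_space.real_distribution_distr[OF prob_space_Unif] by simp
  fix x :: real
  let ?A = "{0..<a} \<inter> {..x}" and ?B = "{a..<1-d} \<inter> {..x-d}" and ?C = "{1-d..<1} \<inter> {..x-d+(1-a)}"
  have "measure (distr Unif borel (shm a d)) {..x} = measure Unif (shm a d -` {..x} \<inter> space Unif)"
    by (rule measure_distr) auto
  also have "shm a d -` {..x} \<inter> space Unif = {v. shm a d v \<le> x}" by auto
  also have "measure Unif {v. shm a d v \<le> x} = measure lborel ({0..<1} \<inter> {v. shm a d v \<le> x})"
    by (rule measure_Unif') simp
  also have "{0..<1} \<inter> {v. shm a d v \<le> x} = (?A \<union> ?B) \<union> ?C" by (rule shm_set[OF a d])
  also have "measure lborel ((?A \<union> ?B) \<union> ?C) = measure lborel (?A \<union> ?B) + measure lborel ?C"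
  proof (rule measure_Union)
    show "emeasure lborel (?A \<union> ?B) \<noteq> \<infinity>"
      by (rule fin_sub[of _ 0 1]) (use a d in auto)
    show "emeasure lborel ?C \<noteq> \<infinity>"
      by (rule fin_sub[of _ "1-d" 1]) auto
  qed (use a d in auto)
  also have "measure lborel (?A \<union> ?B) = measure lborel ?A + measure lborel ?B"
  proof (rule measure_Union)
    show "emeasure lborel ?A \<noteq> \<infinity>"
      by (rule fin_sub[of _ 0 a]) auto
    show "emeasure lborel ?B \<noteq> \<infinity>"
      by (rule fin_sub[of _ a "1-d"]) auto
  qed auto
  also have "measure lborel ?A = max 0 (min a x - 0)" by (rule Ico_atMost_measure) (use a in auto)
  also have "measure lborel ?B = max 0 (min (1-d) (x-d) - a)" by (rule Ico_atMost_measure) (use a d in auto)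
  also have "measure lborel ?C = max 0 (min 1 (x-d+(1-a)) - (1-d))" by (rule Ico_atMost_measure) (use a d in auto)
  also have "max 0 (min a x - 0) + max 0 (min (1-d) (x-d) - a) + max 0 (min 1 (x-d+(1-a)) - (1-d))
      = max 0 (min 1 x)"
    using a d by (simp add: max_def min_def)
  finally show "measure (distr Unif borel (shm a d)) {..x} = max 0 (min 1 x)" .
qed

lemma mod_shift_sum:
  fixes f :: "nat \<Rightarrow> real"
  assumes "k < n"
  shows "(\<Sum>i<n. f ((k + i) mod n)) = (\<Sum>j<n. f j)"
proof -
  have modeq: "(k + i) mod n = (if k + i < n then k + i else k + i - n)" if "i < n" for i
    using assms that by (auto simp: mod_if)
  have inj: "inj_on (\<lambda>i. (k + i) mod n) {..<n}"
  proof (rule inj_onI)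
    fix i i' assume "i \<in> {..<n}" "i' \<in> {..<n}" "(k + i) mod n = (k + i') mod n"
    then show "i = i'" using modeq[of i] modeq[of i'] by (auto split: if_splits)
  qed
  have sub: "(\<lambda>i. (k + i) mod n) ` {..<n} \<subseteq> {..<n}" using assms by auto
  have img: "(\<lambda>i. (k + i) mod n) ` {..<n} = {..<n}"
    by (rule endo_inj_surj[OF _ sub inj]) simp
  have "(\<Sum>j<n. f j) = (\<Sum>j\<in>(\<lambda>i. (k + i) mod n) ` {..<n}. f j)" unfolding img ..
  also have "\<dots> = (\<Sum>i<n. f ((k + i) mod n))" by (subst sum.reindex[OF inj]) simp
  finally show ?thesis by simp
qed

lemma shift_sum_lower:
  fixes R :: "real \<Rightarrow> real"
  assumes a: "0 \<le> a" "a < 1" and n: "0 < n" and v: "a \<le> v" "v < 1"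
    and Rm: "\<And>x y. a \<le> x \<Longrightarrow> x \<le> y \<Longrightarrow> y < 1 \<Longrightarrow> R x \<le> R y"
  shows "(\<Sum>j<n. R (a + real j * ((1 - a) / real n))) \<le> (\<Sum>i<n. R (shm a (real i * ((1 - a) / real n)) v))"
proof -
  define L where "L = 1 - a"
  have L: "0 < L" unfolding L_def using a by simp
  define s where "s = real n * (v - a) / L"
  have s: "0 \<le> s" "s < real n" unfolding s_def using v L n a by (auto simp: field_simps L_def)
  have vs: "v = a + s * (L / real n)" unfolding s_def using L n by (simp add: field_simps)
  define k where "k = nat \<lfloor>s\<rfloor>"
  have kf: "real k \<le> s" "s < real k + 1" unfolding k_def using s by linarith+
  have kn: "k < n" using kf s by linarith
  have trm: "R (a + real ((k + i) mod n) * (L / real n)) \<le> R (shm a (real i * (L / real n)) v)"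
    if i: "i < n" for i
  proof -
    have hpos: "0 < L / real n" using L n by simp
    show ?thesis
    proof (cases "s + real i < real n")
      case True
      then have ki: "k + i < n" using kf by linarith
      then have md: "(k + i) mod n = k + i" by simp
      have lt: "v < 1 - real i * (L / real n)"
      proof -
        have 1: "(s + real i) * (L / real n) < real n * (L / real n)"
          using True hpos by (intro mult_strict_right_mono) auto
        have 2: "real n * (L / real n) = L" using n by simp
        have 3: "v + real i * (L / real n) = a + (s + real i) * (L / real n)"
          using vs n by (simp add: field_simps)
        show ?thesis using 1 2 3 unfolding L_def by linarith
      qed
      have sh: "shm a (real i * (L / real n)) v = a + (s + real i) * (L / real n)"
        unfolding shm_def using v lt vs by (simp add: algebra_simps add_divide_distrib)
      have "real (k + i) * (L / real n) \<le> (s + real i) * (L / real n)"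
        using kf hpos by (intro mult_right_mono) auto
      moreover have "(s + real i) * (L / real n) < L"
      proof -
        have "(s + real i) * (L / real n) < real n * (L / real n)"
          using True hpos by (intro mult_strict_right_mono) auto
        then show ?thesis using n by simp
      qed
      ultimately show ?thesis unfolding sh md
        by (intro Rm) (use a hpos L_def in \<open>auto simp: zero_le_mult_iff\<close>)
    next
      case False
      then have ki: "n \<le> k + i" using kf by linarith
      then have md: "(k + i) mod n = k + i - n" using kn i by (simp add: mod_if)
      have ge: "\<not> v < 1 - real i * (L / real n)"
      proof -
        have 1: "real n * (L / real n) \<le> (s + real i) * (L / real n)"
          using False hpos by (intro mult_right_mono) auto
        have 2: "real n * (L / real n) = L" using n by simp
        have 3: "v + real i * (L / real n) = a + (s + real i) * (L / real n)"
          using vs n by (simp add: field_simps)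
        show ?thesis using 1 2 3 unfolding L_def by linarith
      qed
      have sh: "shm a (real i * (L / real n)) v = a + (s + real i - real n) * (L / real n)"
        unfolding shm_def using v ge vs n L unfolding L_def by (simp add: algebra_simps add_divide_distrib diff_divide_distrib)
      have r: "real (k + i - n) = real k + real i - real n" using ki by (simp add: of_nat_diff)
      have "real (k + i - n) * (L / real n) \<le> (s + real i - real n) * (L / real n)"
        unfolding r using kf hpos by (intro mult_right_mono) auto
      moreover have "(s + real i - real n) * (L / real n) < L"
      proof -
        have "s + real i - real n < real n" using s i by linarith
        then have "(s + real i - real n) * (L / real n) < real n * (L / real n)"
          using hpos by (intro mult_strict_right_mono) auto
        then show ?thesis using n by simp
      qed
      moreover have "0 \<le> real (k + i - n) * (L / real n)" using hpos by (intro mult_nonneg_nonneg) auto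
      ultimately show ?thesis unfolding sh md
        by (intro Rm) (use a L_def in auto)
    qed
  qed
  have "(\<Sum>j<n. R (a + real j * (L / real n))) = (\<Sum>i<n. R (a + real ((k + i) mod n) * (L / real n)))"
    using mod_shift_sum[OF kn, of "\<lambda>j. R (a + real j * (L / real n))"] by simp
  also have "\<dots> \<le> (\<Sum>i<n. R (shm a (real i * (L / real n)) v))"
    by (rule sum_mono) (use trm in auto)
  finally show ?thesis unfolding L_def .
qed



lemma AE_Unif: "AE v in Unif. v \<in> {0<..<1}"
proof (rule AE_I')
  show "- {0<..<1} \<in> null_sets Unif"
    by (auto simp: null_sets_def emeasure_Unif)
qed auto

lemma avg_qc:
  assumes qc: "quasi_convex_on D \<rho>"
    and conv: "\<And>X Y \<gamma>. X \<in> D \<Longrightarrow> Y \<in> D \<Longrightarrow> 0 \<le> \<gamma> \<Longrightarrow> \<gamma> \<le> 1 \<Longrightarrow> (\<lambda>\<omega>. \<gamma> * X \<omega> + (1 - \<gamma>) * Y \<omega>) \<in> D"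
    and ZD: "\<And>j. j < n \<Longrightarrow> Z j \<in> D" and Zc: "\<And>j. j < n \<Longrightarrow> \<rho> (Z j) \<le> c" and n: "0 < n"
  shows "(\<lambda>\<omega>. (1 / real n) * (\<Sum>j<n. Z j \<omega>)) \<in> D \<and> \<rho> (\<lambda>\<omega>. (1 / real n) * (\<Sum>j<n. Z j \<omega>)) \<le> c"
proof -
  have "Suc m \<le> n \<Longrightarrow> (\<lambda>\<omega>. (1 / real (Suc m)) * (\<Sum>j<Suc m. Z j \<omega>)) \<in> D
      \<and> \<rho> (\<lambda>\<omega>. (1 / real (Suc m)) * (\<Sum>j<Suc m. Z j \<omega>)) \<le> c" for m
  proof (induction m)
    case 0
    have "(\<lambda>\<omega>. (1 / real (Suc 0)) * (\<Sum>j<Suc 0. Z j \<omega>)) = Z 0" by (simp add: fun_eq_iff)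
    then show ?case using ZD[of 0] Zc[of 0] 0 by simp
  next
    case (Suc m)
    define S where "S = (\<lambda>\<omega>. (1 / real (Suc m)) * (\<Sum>j<Suc m. Z j \<omega>))"
    define \<gamma> where "\<gamma> = real (Suc m) / real (Suc (Suc m))"
    have IH: "S \<in> D" "\<rho> S \<le> c" using Suc unfolding S_def by auto
    have g: "0 \<le> \<gamma>" "\<gamma> \<le> 1" unfolding \<gamma>_def by auto
    have g1: "\<gamma> * (1 / real (Suc m)) = 1 / real (Suc (Suc m))" unfolding \<gamma>_def by simp
    have g2: "1 - \<gamma> = 1 / real (Suc (Suc m))" unfolding \<gamma>_def by (simp add: field_simps)
    have eq: "(\<lambda>\<omega>. (1 / real (Suc (Suc m))) * (\<Sum>j<Suc (Suc m). Z j \<omega>))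
        = (\<lambda>\<omega>. \<gamma> * S \<omega> + (1 - \<gamma>) * Z (Suc m) \<omega>)"
    proof (rule ext)
      fix \<omega>
      have "\<gamma> * S \<omega> + (1 - \<gamma>) * Z (Suc m) \<omega>
          = (\<gamma> * (1 / real (Suc m))) * (\<Sum>j<Suc m. Z j \<omega>) + (1 - \<gamma>) * Z (Suc m) \<omega>"
        unfolding S_def by (simp only: mult.assoc)
      also have "\<dots> = (1 / real (Suc (Suc m))) * ((\<Sum>j<Suc m. Z j \<omega>) + Z (Suc m) \<omega>)"
        unfolding g1 g2 by (simp only: distrib_left)
      finally show "(1 / real (Suc (Suc m))) * (\<Sum>j<Suc (Suc m). Z j \<omega>)
          = \<gamma> * S \<omega> + (1 - \<gamma>) * Z (Suc m) \<omega>" by simp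
    qed
    have ZS: "Z (Suc m) \<in> D" "\<rho> (Z (Suc m)) \<le> c" using Suc.prems ZD Zc by auto
    have "(\<lambda>\<omega>. \<gamma> * S \<omega> + (1 - \<gamma>) * Z (Suc m) \<omega>) \<in> D" by (rule conv[OF IH(1) ZS(1) g])
    moreover have "\<rho> (\<lambda>\<omega>. \<gamma> * S \<omega> + (1 - \<gamma>) * Z (Suc m) \<omega>) \<le> max (\<rho> S) (\<rho> (Z (Suc m)))"
      using qc IH(1) ZS(1) g unfolding quasi_convex_on_def by auto
    ultimately show ?case unfolding eq using IH ZS by (meson max.boundedI order_trans)
  qed
  moreover obtain m where "n = Suc m" using n gr0_implies_Suc by blast
  ultimately show ?thesis by auto
qed

context rvar
begin

definition Qb :: "real \<Rightarrow> real \<Rightarrow> real" where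
  "Qb b v = (if v \<in> {0<..<1} then qf v else b)"

lemma Qb_alt: "Qb b = (\<lambda>v. if v \<in> {0<..<1} then Q v else b)"
  by (auto simp: fun_eq_iff Qb_def Q_def)

lemma Qb_meas[measurable]: "Qb b \<in> borel_measurable borel"
  unfolding Qb_alt by measurable

lemma distr_Qb: "distr Unif borel (Qb b) = distr M borel X"
proof -
  have "distr Unif borel (Qb b) = distr Unif borel Q"
  proof (rule distr_cong_AE)
    show "AE x in Unif. Qb b x = Q x" using AE_Unif by eventually_elim (simp add: Qb_alt)
  qed auto
  then show ?thesis using distr_Q by simp
qed

lemma core:
  assumes al: "atomless M" and Xi: "integrable M X"
    and Dcl: "\<And>Y. Y \<in> borel_measurable M \<Longrightarrow> distr M borel Y = distr M borel X \<Longrightarrow> Y \<in> D"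
    and conv: "\<And>X Y \<gamma>. X \<in> D \<Longrightarrow> Y \<in> D \<Longrightarrow> 0 \<le> \<gamma> \<Longrightarrow> \<gamma> \<le> 1 \<Longrightarrow> (\<lambda>\<omega>. \<gamma> * X \<omega> + (1 - \<gamma>) * Y \<omega>) \<in> D"
    and XD: "X \<in> D" and qc: "quasi_convex_on D \<rho>" and li: "law_invariant_on M D \<rho>"
    and a: "0 \<le> a" "a < 1" and b: "\<And>v. a \<le> v \<Longrightarrow> 0 < v \<Longrightarrow> v < 1 \<Longrightarrow> b \<le> qf v"
    and t: "t < (LINT v:{a<..<1}|lborel. qf v) / (1 - a)"
  shows "\<exists>Y\<in>D. \<rho> Y \<le> \<rho> X \<and> measure M {\<omega> \<in> space M. Y \<omega> < t} \<le> a"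
proof -
  interpret qmono qf
  proof
    show "\<And>x y. 0 < x \<Longrightarrow> x \<le> y \<Longrightarrow> y < 1 \<Longrightarrow> qf x \<le> qf y" by (rule qf_mono)
    show "set_integrable lborel {0<..<1} qf"
      using integrable_transfer[of "\<lambda>x. x"] Xi by simp
  qed
  have tI: "t < I a / (1 - a)" using t unfolding I_def .
  define L where "L = 1 - a"
  have L: "0 < L" unfolding L_def using a by simp
  have lim: "(\<lambda>i. b / real (Suc i) + (LINT v:{a<..1 - (1 - a) / real (Suc i)}|lborel. qf v) / (1 - a))
      \<longlonglongrightarrow> 0 + I a / (1 - a)"
  proof (intro tendsto_add tendsto_divide tendsto_const)
    show "(\<lambda>i. b / real (Suc i)) \<longlonglongrightarrow> 0"
      using LIMSEQ_Suc[OF lim_const_over_n[of b]] by simp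
    show "(\<lambda>i. LINT v:{a<..1 - (1 - a) / real (Suc i)}|lborel. qf v) \<longlonglongrightarrow> I a"
      by (rule I_limit[OF a])
  qed (use a in auto)
  have "eventually (\<lambda>i. t < b / real (Suc i) + (LINT v:{a<..1 - (1 - a) / real (Suc i)}|lborel. qf v) / (1 - a)) sequentially"
    using order_tendstoD(1)[OF lim] tI by simp
  then obtain i where i: "t < b / real (Suc i) + (LINT v:{a<..1 - (1 - a) / real (Suc i)}|lborel. qf v) / (1 - a)"
    by (auto simp: eventually_sequentially)
  define n where "n = Suc i"
  have n: "0 < n" unfolding n_def by simp
  define h where "h = (1 - a) / real n"
  have h: "0 < h" "real n * h = 1 - a" unfolding h_def using a n by auto
  interpret atomless_ps M by unfold_locales (rule al)
  obtain V where V[measurable]: "V \<in> borel_measurable M" and dV: "distr M borel V = Unif"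
    using exists_uniform by blast
  define Z where "Z j = (\<lambda>\<omega>. Qb b (shm a (real j * h) (V \<omega>)))" for j
  have Zm[measurable]: "Z j \<in> borel_measurable M" for j unfolding Z_def by measurable
  have dZ: "distr M borel (Z j) = distr M borel X" if j: "j < n" for j
  proof -
    have d: "0 \<le> real j * h" "real j * h < 1 - a"
    proof -
      show "0 \<le> real j * h" using h by simp
      have "real j * h < real n * h" using j h by (intro mult_strict_right_mono) auto
      then show "real j * h < 1 - a" using h by simp
    qed
    have "distr M borel (Z j) = distr M borel ((Qb b \<circ> shm a (real j * h)) \<circ> V)"
      unfolding Z_def by (simp add: comp_def)
    also have "\<dots> = distr (distr M borel V) borel (Qb b \<circ> shm a (real j * h))"
      by (rule distr_distr[symmetric]) measurable
    also have "\<dots> = distr Unif borel (Qb b \<circ> shm a (real j * h))" using dV by simp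
    also have "\<dots> = distr (distr Unif borel (shm a (real j * h))) borel (Qb b)"
      by (rule distr_distr[symmetric]) measurable
    also have "\<dots> = distr Unif borel (Qb b)" using shm_preserves[OF a d] by simp
    also have "\<dots> = distr M borel X" by (rule distr_Qb)
    finally show ?thesis .
  qed
  have ZD: "Z j \<in> D" if "j < n" for j using Dcl[OF Zm dZ[OF that]] .
  have Zr: "\<rho> (Z j) \<le> \<rho> X" if jn: "j < n" for j
  proof -
    have "\<rho> (Z j) = \<rho> X"
      using li[unfolded law_invariant_on_def, rule_format, OF ZD[OF jn] XD dZ[OF jn]] .
    then show ?thesis by simp
  qed
  define Y where "Y = (\<lambda>\<omega>. (1 / real n) * (\<Sum>j<n. Z j \<omega>))"
  have YDr: "Y \<in> D \<and> \<rho> Y \<le> \<rho> X"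
    unfolding Y_def by (rule avg_qc[OF qc conv ZD Zr n])
  then have YD: "Y \<in> D" and Yr: "\<rho> Y \<le> \<rho> X" by auto
  define hY where "hY v = (1 / real n) * (\<Sum>j<n. Qb b (shm a (real j * h) v))" for v
  have hYm[measurable]: "hY \<in> borel_measurable borel" unfolding hY_def by measurable
  have Yh: "Y \<omega> = hY (V \<omega>)" for \<omega> unfolding Y_def hY_def Z_def ..
  have Rm: "Qb b x \<le> Qb b y" if xy: "a \<le> x" "x \<le> y" "y < 1" for x y
  proof (cases "0 < x")
    case True then show ?thesis using qf_mono[of x y] xy by (simp add: Qb_def)
  next
    case False
    then have "Qb b x = b" by (simp add: Qb_def)
    moreover have "b \<le> Qb b y" using b[of y] xy by (auto simp: Qb_def)
    ultimately show ?thesis by simp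
  qed
  have low: "t \<le> hY v" if v: "a \<le> v" "v < 1" for v
  proof -
    have s1: "(\<Sum>j<n. Qb b (a + real j * h)) \<le> (\<Sum>j<n. Qb b (shm a (real j * h) v))"
      unfolding h_def by (rule shift_sum_lower[OF a n v]) (rule Rm)
    have "(\<Sum>j<n. Qb b (a + real j * h)) = Qb b (a + real 0 * h) + (\<Sum>j<i. Qb b (a + real (Suc j) * h))"
      unfolding n_def by (rule sum.lessThan_Suc_shift)
    also have "(\<Sum>j<i. Qb b (a + real (Suc j) * h)) = (\<Sum>j<i. qf (a + real (Suc j) * h))"
    proof (rule sum.cong)
      fix j assume j: "j \<in> {..<i}"
      have "0 < real (Suc j) * h" using h by simp
      moreover have "real (Suc j) * h < real n * h" using j h unfolding n_def by (intro mult_strict_right_mono) auto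
      ultimately have "0 < a + real (Suc j) * h \<and> a + real (Suc j) * h < 1" using a h by linarith
      then have "a + real (Suc j) * h \<in> {0<..<1}" by simp
      then show "Qb b (a + real (Suc j) * h) = qf (a + real (Suc j) * h)" by (simp add: Qb_def)
    qed simp
    also have "\<dots> = (\<Sum>j\<in>{1..i}. qf (a + real j * h))"
      using sum.atLeast1_atMost_eq[of "\<lambda>j. qf (a + real j * h)" i] by simp
    finally have s2: "(\<Sum>j<n. Qb b (a + real j * h)) = Qb b a + (\<Sum>j\<in>{1..i}. qf (a + real j * h))" by simp
    have Qa: "b \<le> Qb b a" using Rm[of a a] b[of a] a by (cases "0 < a") (auto simp: Qb_def)
    have R: "(LINT v:{a<..a + real i * h}|lborel. qf v) \<le> h * (\<Sum>j\<in>{1..i}. qf (a + real j * h))"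
      by (rule riemann[OF a n h_def]) (simp add: n_def)
    have ai: "a + real i * h = 1 - (1 - a) / real (Suc i)"
      using h unfolding n_def h_def by (simp add: field_simps)
    have "t < b / real n + (LINT v:{a<..a + real i * h}|lborel. qf v) / (1 - a)"
      using i ai unfolding n_def by simp
    also have "(LINT v:{a<..a + real i * h}|lborel. qf v) / (1 - a) \<le> h * (\<Sum>j\<in>{1..i}. qf (a + real j * h)) / (1 - a)"
      using R a by (intro divide_right_mono) auto
    also have "h * (\<Sum>j\<in>{1..i}. qf (a + real j * h)) / (1 - a) = (1 / real n) * (\<Sum>j\<in>{1..i}. qf (a + real j * h))"
    proof -
      have "h / (1 - a) = h / (real n * h)" using h(2) by simp
      also have "\<dots> = 1 / real n" using h(1) by simp
      finally have hn: "h / (1 - a) = 1 / real n" .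
      show ?thesis using hn by (metis times_divide_eq_left mult.commute)
    qed
    also have "b / real n \<le> (1 / real n) * Qb b a" using Qa n by (simp add: divide_right_mono)
    finally have "t < (1 / real n) * (Qb b a + (\<Sum>j\<in>{1..i}. qf (a + real j * h)))"
      by (simp add: distrib_left)
    also have "\<dots> \<le> (1 / real n) * (\<Sum>j<n. Qb b (shm a (real j * h) v))"
      using s1 s2 n by (intro mult_left_mono) auto
    finally show ?thesis unfolding hY_def by simp
  qed
  have meq: "measure M {\<omega> \<in> space M. Y \<omega> < t} = measure Unif {v. hY v < t}"
  proof -
    have "{\<omega> \<in> space M. Y \<omega> < t} = V -` {v. hY v < t} \<inter> space M" using Yh by auto
    then have "measure M {\<omega> \<in> space M. Y \<omega> < t} = measure (distr M borel V) {v. hY v < t}"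
      by (simp add: measure_distr)
    then show ?thesis using dV by simp
  qed
  also have "\<dots> = measure lborel ({0..<1} \<inter> {v. hY v < t})" by (rule measure_Unif') simp
  also have "\<dots> \<le> measure lborel {0..<a}"
  proof (rule measure_mono_fmeasurable)
    show "{0..<1} \<inter> {v. hY v < t} \<subseteq> {0..<a}"
    proof
      fix v assume v: "v \<in> {0..<1} \<inter> {v. hY v < t}"
      show "v \<in> {0..<a}"
      proof (cases "a \<le> v")
        case True then show ?thesis using low[of v] v by auto
      qed (use v in auto)
    qed
    show "{0..<1} \<inter> {v. hY v < t} \<in> sets lborel" by simp
    show "{0..<a} \<in> fmeasurable lborel" using a by (auto simp: fmeasurable_def)
  qed
  also have "\<dots> = a" using a by simp
  finally show ?thesis using YD Yr by blast
qed

end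



locale l1var = rvar +
  assumes Xint: "integrable M X"
begin

sublocale qmono qf
proof
  show "\<And>x y. 0 < x \<Longrightarrow> x \<le> y \<Longrightarrow> y < 1 \<Longrightarrow> qf x \<le> qf y" by (rule qf_mono)
  show "set_integrable lborel {0<..<1} qf"
    using integrable_transfer[of "\<lambda>x. x"] Xint by simp
qed

lemma ES_eq': assumes "0 \<le> a" "a < 1" shows "ES M a X = ereal (I a / (1 - a))"
  using ES_eq[OF assms] unfolding I_def by simp

lemma EX_eq: "(\<integral>w. X w \<partial>M) = I 0"
  using integral_transfer[of "\<lambda>x. x"] unfolding I_def by simp

lemma Eplus_eq: "(\<integral>w. max 0 (X w - t) \<partial>M) = (LINT v:{0<..<1}|lborel. max 0 (qf v - t))"
  using integral_transfer[of "\<lambda>x. max 0 (x - t)"] by simp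

lemma ES_ge_VaR: assumes "0 < a" "a \<le> 1" shows "VaR M a X \<le> ES M a X"
proof (cases "a = 1")
  case True then show ?thesis by (simp add: ES_def)
next
  case False
  then have a: "0 < a" "a < 1" using assms by auto
  have "(1 - a) * qf a \<le> I a" by (rule I_lower) (use a qm in auto)
  then have "qf a \<le> I a / (1 - a)" using a by (simp add: pos_le_divide_eq mult.commute)
  then show ?thesis using a by (simp add: VaR_eq ES_eq')
qed

lemma ES_ge_VaR_plus: assumes a: "0 \<le> a" "a < 1" shows "VaR_plus M a X \<le> ES M a X"
proof -
  have le: "VaR_plus M a X \<le> ereal (qf v)" if "a < v" "v < 1" for v
    by (rule VaR_plus_le) (use a that in auto)
  obtain v where v: "a < v" "v < 1" using a dense by blast
  show ?thesis
  proof (cases "VaR_plus M a X")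
    case (real r)
    have "(1 - a) * r \<le> I a" by (rule I_lower) (use a le real in auto)
    then have "r \<le> I a / (1 - a)" using a by (simp add: pos_le_divide_eq mult.commute)
    then show ?thesis using real a by (simp add: ES_eq')
  next
    case PInf then show ?thesis using le[OF v] by simp
  next
    case MInf then show ?thesis by simp
  qed
qed

lemma ES_le_VaR1: assumes a: "0 \<le> a" "a < 1" shows "ES M a X \<le> VaR M 1 X"
  unfolding VaR_def
proof (rule Inf_greatest)
  fix z assume "z \<in> ereal ` {x. 1 \<le> F x}"
  then obtain x where x: "z = ereal x" "1 \<le> F x" by auto
  have "I a \<le> (1 - a) * x"
    by (rule I_upper) (use a x qf_le_iff in auto)
  then have "I a / (1 - a) \<le> x" using a by (simp add: pos_divide_le_eq mult.commute)
  then show "ES M a X \<le> z" using x a by (simp add: ES_eq')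
qed

lemma ES_mono_full: assumes "0 \<le> a" "a \<le> b" "b \<le> 1" shows "ES M a X \<le> ES M b X"
proof (cases "b = 1")
  case True
  show ?thesis
  proof (cases "a = 1")
    case False then show ?thesis using ES_le_VaR1[of a] assms True by (simp add: ES_def[of M 1])
  qed (use True in simp)
next
  case False
  then show ?thesis using ES_mono[of a b] assms by (simp add: ES_eq')
qed

lemma RU_le': assumes "0 \<le> a" "a < 1"
  shows "I a \<le> (1 - a) * t + (\<integral>w. max 0 (X w - t) \<partial>M)"
  using RU_le[OF assms, of t] Eplus_eq by simp

lemma RU_eq': assumes "0 < a" "a < 1"
  shows "I a = (1 - a) * qf a + (\<integral>w. max 0 (X w - qf a) \<partial>M)"
  using RU_eq[OF assms] Eplus_eq by simp

end

lemma integrable_pospart: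
  assumes "integrable M X" and P: "prob_space M" shows "integrable M (\<lambda>w. max 0 (X w - t::real))"
proof -
  have m: "(\<lambda>w. max 0 (X w - t)) \<in> borel_measurable M" using assms by measurable
  show ?thesis
  proof (rule Bochner_Integration.integrable_bound[OF _ m])
    interpret prob_space M by (fact P)
    show "integrable M (\<lambda>w. \<bar>X w\<bar> + \<bar>t\<bar>)"
      using assms by (intro Bochner_Integration.integrable_add integrable_abs) auto
  qed auto
qed

lemma ES_qc:
  assumes P: "prob_space M" and X: "integrable M X" and Y: "integrable M Y"
    and g: "0 \<le> \<gamma>" "\<gamma> \<le> 1" and a: "0 \<le> a" "a \<le> 1"
  shows "ES M a (\<lambda>w. \<gamma> * X w + (1 - \<gamma>) * Y w) \<le> max (ES M a X) (ES M a Y)"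
proof -
  define Z where "Z = (\<lambda>w. \<gamma> * X w + (1 - \<gamma>) * Y w)"
  have Zi: "integrable M Z" unfolding Z_def using X Y by auto
  interpret P: prob_space M by (fact P)
  interpret X: l1var M X by unfold_locales (use X in auto)
  interpret Y: l1var M Y by unfold_locales (use Y in auto)
  interpret Z: l1var M Z by unfold_locales (use Zi in auto)
  have cvx: "ereal (\<gamma> * u + (1 - \<gamma>) * v) \<le> max (ereal u) (ereal v)" for u v
  proof -
    have "\<gamma> * u + (1 - \<gamma>) * v \<le> \<gamma> * max u v + (1 - \<gamma>) * max u v"
      using g by (intro add_mono mult_left_mono) auto
    then show ?thesis by (simp add: algebra_simps max_def split: if_splits)
  qed
  consider "a = 0" | "0 < a" "a < 1" | "a = 1" using a by linarith
  then have "ES M a Z \<le> max (ES M a X) (ES M a Y)"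
  proof cases
    case 1
    have "Z.I 0 = \<gamma> * X.I 0 + (1 - \<gamma>) * Y.I 0"
      using Z.EX_eq X.EX_eq Y.EX_eq X Y unfolding Z_def by simp
    then show ?thesis using 1 cvx by (simp add: X.ES_eq' Y.ES_eq' Z.ES_eq' add_divide_distrib)
  next
    case 2
    define tX where "tX = X.qf a"
    define tY where "tY = Y.qf a"
    define tZ where "tZ = \<gamma> * tX + (1 - \<gamma>) * tY"
    have pw: "max 0 (Z w - tZ) \<le> \<gamma> * max 0 (X w - tX) + (1 - \<gamma>) * max 0 (Y w - tY)" for w
    proof -
      have "Z w - tZ = \<gamma> * (X w - tX) + (1 - \<gamma>) * (Y w - tY)" unfolding Z_def tZ_def by (simp add: algebra_simps)
      also have "\<dots> \<le> \<gamma> * max 0 (X w - tX) + (1 - \<gamma>) * max 0 (Y w - tY)"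
        using g by (intro add_mono mult_left_mono) auto
      finally have le: "Z w - tZ \<le> \<gamma> * max 0 (X w - tX) + (1 - \<gamma>) * max 0 (Y w - tY)" .
      have "0 \<le> \<gamma> * max 0 (X w - tX) + (1 - \<gamma>) * max 0 (Y w - tY)" using g by simp
      then show ?thesis using le by (rule max.boundedI)
    qed
    have int: "(\<integral>w. max 0 (Z w - tZ) \<partial>M) \<le> \<gamma> * (\<integral>w. max 0 (X w - tX) \<partial>M) + (1 - \<gamma>) * (\<integral>w. max 0 (Y w - tY) \<partial>M)"
    proof -
      have "(\<integral>w. max 0 (Z w - tZ) \<partial>M) \<le> (\<integral>w. \<gamma> * max 0 (X w - tX) + (1 - \<gamma>) * max 0 (Y w - tY) \<partial>M)"
      proof (rule integral_mono)
        show "integrable M (\<lambda>w. max 0 (Z w - tZ))" by (rule integrable_pospart[OF Zi P])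
        show "integrable M (\<lambda>w. \<gamma> * max 0 (X w - tX) + (1 - \<gamma>) * max 0 (Y w - tY))"
          by (intro Bochner_Integration.integrable_add integrable_mult_right integrable_pospart[OF X P] integrable_pospart[OF Y P])
        show "max 0 (Z w - tZ) \<le> \<gamma> * max 0 (X w - tX) + (1 - \<gamma>) * max 0 (Y w - tY)" for w by (rule pw)
      qed
      also have "\<dots> = \<gamma> * (\<integral>w. max 0 (X w - tX) \<partial>M) + (1 - \<gamma>) * (\<integral>w. max 0 (Y w - tY) \<partial>M)"
        using integrable_pospart[OF X P] integrable_pospart[OF Y P] by simp
      finally show ?thesis .
    qed
    have "Z.I a \<le> (1 - a) * tZ + (\<integral>w. max 0 (Z w - tZ) \<partial>M)" using Z.RU_le' 2 by simp
    also have "\<dots> \<le> \<gamma> * ((1 - a) * tX + (\<integral>w. max 0 (X w - tX) \<partial>M)) + (1 - \<gamma>) * ((1 - a) * tY + (\<integral>w. max 0 (Y w - tY) \<partial>M))"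
      using int unfolding tZ_def by (simp add: algebra_simps)
    also have "\<dots> = \<gamma> * X.I a + (1 - \<gamma>) * Y.I a"
      using X.RU_eq'[OF 2] Y.RU_eq'[OF 2] unfolding tX_def tY_def by simp
    finally have AB: "Z.I a \<le> \<gamma> * X.I a + (1 - \<gamma>) * Y.I a" .
    have "Z.I a / (1 - a) \<le> (\<gamma> * X.I a + (1 - \<gamma>) * Y.I a) / (1 - a)"
      by (rule divide_right_mono[OF AB]) (use 2 in auto)
    also have "\<dots> = \<gamma> * (X.I a / (1 - a)) + (1 - \<gamma>) * (Y.I a / (1 - a))"
      by (simp add: add_divide_distrib)
    finally have "Z.I a / (1 - a) \<le> \<gamma> * (X.I a / (1 - a)) + (1 - \<gamma>) * (Y.I a / (1 - a))" .
    then have "ereal (Z.I a / (1 - a)) \<le> ereal (\<gamma> * (X.I a / (1 - a)) + (1 - \<gamma>) * (Y.I a / (1 - a)))" by simp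
    also have "\<dots> \<le> max (ereal (X.I a / (1 - a))) (ereal (Y.I a / (1 - a)))" by (rule cvx)
    finally show ?thesis using 2 by (simp add: X.ES_eq' Y.ES_eq' Z.ES_eq')
  next
    case 3
    have "VaR M 1 Z \<le> max (VaR M 1 X) (VaR M 1 Y)"
    proof (rule ccontr)
      assume nle: "\<not> VaR M 1 Z \<le> max (VaR M 1 X) (VaR M 1 Y)"
      have lt: "max (VaR M 1 X) (VaR M 1 Y) < VaR M 1 Z" using nle by (simp only: not_le)
      then have "VaR M 1 X < VaR M 1 Z \<and> VaR M 1 Y < VaR M 1 Z" by (simp only: max_less_iff_conj)
      then have "VaR M 1 X < VaR M 1 Z" "VaR M 1 Y < VaR M 1 Z" by auto
      then obtain x y where x: "1 \<le> cdf_rv M X x" "ereal x < VaR M 1 Z" and y: "1 \<le> cdf_rv M Y y" "ereal y < VaR M 1 Z"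
        unfolding VaR_def[of M 1 X] VaR_def[of M 1 Y] Inf_less_iff by auto
      have Xs: "{w \<in> space M. X w \<le> x} \<in> sets M" "{w \<in> space M. Y w \<le> y} \<in> sets M" "{w \<in> space M. Z w \<le> max x y} \<in> sets M"
        using X Y Zi by auto
      have "AE w in M. w \<in> {w \<in> space M. X w \<le> x}"
        using P.prob_eq_1[OF Xs(1)] x(1) X.F_le1[of x] unfolding cdf_rv_def by simp
      moreover have "AE w in M. w \<in> {w \<in> space M. Y w \<le> y}"
        using P.prob_eq_1[OF Xs(2)] y(1) Y.F_le1[of y] unfolding cdf_rv_def by simp
      ultimately have "AE w in M. w \<in> {w \<in> space M. Z w \<le> max x y}"
      proof eventually_elim
        case (elim w)
        have "\<gamma> * X w + (1 - \<gamma>) * Y w \<le> \<gamma> * max x y + (1 - \<gamma>) * max x y"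
          using elim g by (intro add_mono mult_left_mono) auto
        then show ?case using elim unfolding Z_def by (simp add: algebra_simps)
      qed
      then have "cdf_rv M Z (max x y) = 1"
        using P.prob_eq_1[OF Xs(3)] unfolding cdf_rv_def by simp
      then have "max x y \<in> {x. 1 \<le> cdf_rv M Z x}" by simp
      then have "ereal (max x y) \<in> ereal ` {x. 1 \<le> cdf_rv M Z x}" by (rule imageI)
      then have "VaR M 1 Z \<le> ereal (max x y)" unfolding VaR_def by (rule Inf_lower)
      then show False using x(2) y(2) by (simp add: max_def split: if_splits)
    qed
    then show ?thesis using 3 by (simp add: ES_def)
  qed
  then show ?thesis unfolding Z_def .
qed



lemma cdf_eq_of_distr:
  assumes [measurable]: "X \<in> borel_measurable M" "Y \<in> borel_measurable M"
    and d: "distr M borel X = distr M borel Y"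
  shows "cdf_rv M X = cdf_rv M Y"
proof (rule ext)
  fix x
  have "cdf_rv M X x = measure (distr M borel X) {..x}"
    unfolding cdf_rv_def by (subst measure_distr) (auto intro!: arg_cong[where f="measure M"])
  also have "\<dots> = measure (distr M borel Y) {..x}" using d by simp
  also have "\<dots> = cdf_rv M Y x"
    unfolding cdf_rv_def by (subst measure_distr) (auto intro!: arg_cong[where f="measure M"])
  finally show "cdf_rv M X x = cdf_rv M Y x" .
qed

lemma ES_Lambda_cong: assumes h: "cdf_rv M X = cdf_rv M Y" shows "ES_Lambda M \<Lambda> X = ES_Lambda M \<Lambda> Y"
  unfolding ES_Lambda_def ES_def VaR_def h ..

lemma sup_min_inf_max:
  fixes g :: "real \<Rightarrow> ereal"
  assumes g: "antimono g"
  shows "(SUP x. min (g x) (ereal x)) = (INF x. max (g x) (ereal x))"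
proof (rule antisym)
  have pw: "min (g x) (ereal x) \<le> max (g y) (ereal y)" for x y
  proof (cases "x \<le> y")
    case True
    then have "min (g x) (ereal x) \<le> ereal y" by (simp add: min.coboundedI2)
    then show ?thesis by (simp add: le_max_iff_disj)
  next
    case False
    then have "g x \<le> g y" using g by (simp add: antimono_def)
    then have "min (g x) (ereal x) \<le> g y" by (simp add: min.coboundedI1)
    then show ?thesis by (simp add: le_max_iff_disj)
  qed
  show "(SUP x. min (g x) (ereal x)) \<le> (INF x. max (g x) (ereal x))"
    by (intro SUP_least INF_greatest pw)
  show "(INF x. max (g x) (ereal x)) \<le> (SUP x. min (g x) (ereal x))"
  proof (rule ccontr)
    assume "\<not> ?thesis"
    then have "(SUP x. min (g x) (ereal x)) < (INF x. max (g x) (ereal x))" by (simp add: not_le)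
    then obtain r where r: "(SUP x. min (g x) (ereal x)) < ereal r" "ereal r < (INF x. max (g x) (ereal x))"
      using ereal_dense2 by blast
    have "min (g r) (ereal r) \<le> (SUP x. min (g x) (ereal x))" by (rule SUP_upper) simp
    then have "min (g r) (ereal r) < ereal r" using r(1) by simp
    then have 1: "g r < ereal r" by (simp add: min_less_iff_disj)
    have "(INF x. max (g x) (ereal x)) \<le> max (g r) (ereal r)" by (rule INF_lower) simp
    then have "ereal r < max (g r) (ereal r)" using r(2) by simp
    then have "ereal r < g r" by (simp add: less_max_iff_disj)
    then show False using 1 by simp
  qed
qed

lemma L1_conv:
  "X \<in> L1 M \<Longrightarrow> Y \<in> L1 M \<Longrightarrow> (\<lambda>\<omega>. \<gamma> * X \<omega> + (1 - \<gamma>) * Y \<omega>) \<in> L1 M"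
  unfolding L1_def by auto

lemma L1bb_conv:
  assumes "X \<in> L1_bdd_below M" "Y \<in> L1_bdd_below M" "0 \<le> \<gamma>" "\<gamma> \<le> 1"
  shows "(\<lambda>\<omega>. \<gamma> * X \<omega> + (1 - \<gamma>) * Y \<omega>) \<in> L1_bdd_below M"
proof -
  obtain c1 c2 where c: "AE \<omega> in M. c1 \<le> X \<omega>" "AE \<omega> in M. c2 \<le> Y \<omega>"
    using assms unfolding L1_bdd_below_def by auto
  have "AE \<omega> in M. min c1 c2 \<le> \<gamma> * X \<omega> + (1 - \<gamma>) * Y \<omega>"
    using c
  proof eventually_elim
    case (elim \<omega>)
    have "\<gamma> * min c1 c2 + (1 - \<gamma>) * min c1 c2 \<le> \<gamma> * X \<omega> + (1 - \<gamma>) * Y \<omega>"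
      using elim assms(3,4) by (intro add_mono mult_left_mono) auto
    then show ?case by (simp add: algebra_simps)
  qed
  then show ?thesis using assms unfolding L1_bdd_below_def by auto
qed

lemma L1_cl:
  assumes "X \<in> L1 M" "Y \<in> borel_measurable M" "distr M borel Y = distr M borel X"
  shows "Y \<in> L1 M"
proof -
  have Xm: "X \<in> borel_measurable M" using assms(1) unfolding L1_def by auto
  have "integrable (distr M borel X) (\<lambda>x. x)"
    using assms(1) integrable_distr_eq[OF Xm, of "\<lambda>x. x"] unfolding L1_def by simp
  then have "integrable (distr M borel Y) (\<lambda>x. x)" using assms(3) by simp
  then show ?thesis using integrable_distr_eq[OF assms(2), of "\<lambda>x. x"] unfolding L1_def by simp
qed

lemma L1bb_cl:
  assumes "X \<in> L1_bdd_below M" "Y \<in> borel_measurable M" "distr M borel Y = distr M borel X"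
  shows "Y \<in> L1_bdd_below M"
proof -
  have XL: "X \<in> L1 M" using assms(1) unfolding L1_bdd_below_def L1_def by auto
  have YL: "integrable M Y" using L1_cl[OF XL assms(2,3)] unfolding L1_def by simp
  have Xm: "X \<in> borel_measurable M" using XL unfolding L1_def by auto
  obtain c where c: "AE \<omega> in M. c \<le> X \<omega>" using assms(1) unfolding L1_bdd_below_def by auto
  have cX: "AE x in distr M borel X. c \<le> x" using c by (subst AE_distr_iff[OF Xm]) auto
  have "AE x in distr M borel Y. c \<le> x" unfolding assms(3) by (fact cX)
  then have "AE \<omega> in M. c \<le> Y \<omega>" by (subst (asm) AE_distr_iff[OF assms(2)]) auto
  then show ?thesis using YL unfolding L1_bdd_below_def by auto
qed

lemma ES_Lambda_qc:
  assumes P: "prob_space M" and DL: "D \<subseteq> L1 M"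
    and conv: "\<And>X Y \<gamma>. X \<in> D \<Longrightarrow> Y \<in> D \<Longrightarrow> 0 \<le> \<gamma> \<Longrightarrow> \<gamma> \<le> 1 \<Longrightarrow> (\<lambda>\<omega>. \<gamma> * X \<omega> + (1 - \<gamma>) * Y \<omega>) \<in> D"
    and \<Lambda>: "\<And>x. 0 \<le> \<Lambda> x \<and> \<Lambda> x \<le> 1"
  shows "quasi_convex_on D (ES_Lambda M \<Lambda>)"
  unfolding quasi_convex_on_def
proof (intro ballI)
  fix X Y \<gamma> assume X: "X \<in> D" and Y: "Y \<in> D" and g: "\<gamma> \<in> {0..1::real}"
  have Xi: "integrable M X" and Yi: "integrable M Y" using X Y DL unfolding L1_def by auto
  show "ES_Lambda M \<Lambda> (\<lambda>\<omega>. \<gamma> * X \<omega> + (1 - \<gamma>) * Y \<omega>) \<le> max (ES_Lambda M \<Lambda> X) (ES_Lambda M \<Lambda> Y)"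
    unfolding ES_Lambda_def
  proof (rule SUP_least)
    fix x :: real
    let ?Z = "\<lambda>\<omega>. \<gamma> * X \<omega> + (1 - \<gamma>) * Y \<omega>"
    have le: "ES M (\<Lambda> x) ?Z \<le> max (ES M (\<Lambda> x) X) (ES M (\<Lambda> x) Y)"
      by (rule ES_qc[OF P Xi Yi]) (use g \<Lambda> in auto)
    have A: "min (ES M (\<Lambda> x) X) (ereal x) \<le> (SUP x. min (ES M (\<Lambda> x) X) (ereal x))" by (rule SUP_upper) simp
    have B: "min (ES M (\<Lambda> x) Y) (ereal x) \<le> (SUP x. min (ES M (\<Lambda> x) Y) (ereal x))" by (rule SUP_upper) simp
    from le have "ES M (\<Lambda> x) ?Z \<le> ES M (\<Lambda> x) X \<or> ES M (\<Lambda> x) ?Z \<le> ES M (\<Lambda> x) Y"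
      by (simp add: le_max_iff_disj)
    then show "min (ES M (\<Lambda> x) ?Z) (ereal x) \<le> max (SUP x. min (ES M (\<Lambda> x) X) (ereal x)) (SUP x. min (ES M (\<Lambda> x) Y) (ereal x))"
    proof
      assume "ES M (\<Lambda> x) ?Z \<le> ES M (\<Lambda> x) X"
      then have "min (ES M (\<Lambda> x) ?Z) (ereal x) \<le> min (ES M (\<Lambda> x) X) (ereal x)" by (rule min.mono) simp
      then show ?thesis using A by (meson max.coboundedI1 order_trans)
    next
      assume "ES M (\<Lambda> x) ?Z \<le> ES M (\<Lambda> x) Y"
      then have "min (ES M (\<Lambda> x) ?Z) (ereal x) \<le> min (ES M (\<Lambda> x) Y) (ereal x)" by (rule min.mono) simp
      then show ?thesis using B by (meson max.coboundedI2 order_trans)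
    qed
  qed
qed

lemma ES_Lambda_li:
  assumes DL: "D \<subseteq> L1 M"
  shows "law_invariant_on M D (ES_Lambda M \<Lambda>)"
  unfolding law_invariant_on_def
proof (intro ballI impI)
  fix X Y assume X: "X \<in> D" and Y: "Y \<in> D" and d: "distr M borel X = distr M borel Y"
  have Xm: "X \<in> borel_measurable M" and Ym: "Y \<in> borel_measurable M" using X Y DL unfolding L1_def by auto
  show "ES_Lambda M \<Lambda> X = ES_Lambda M \<Lambda> Y" by (rule ES_Lambda_cong[OF cdf_eq_of_distr[OF Xm Ym d]])
qed

lemma ereal_le_by_reals:
  fixes A B :: ereal
  assumes "\<And>x. B < ereal x \<Longrightarrow> A \<le> ereal x"
  shows "A \<le> B"
proof (rule ccontr)
  assume "\<not> A \<le> B"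
  then have "B < A" by simp
  then obtain z where z: "B < ereal z" "ereal z < A" using ereal_dense2 by blast
  have "A \<le> ereal z" by (rule assms) (rule z(1))
  then show False using z(2) by simp
qed

lemma VaR_Lambda_le_ES:
  assumes P: "prob_space M" and X: "integrable M X" and \<Lambda>: "\<And>x. 0 < \<Lambda> x \<and> \<Lambda> x \<le> 1"
  shows "VaR_Lambda M \<Lambda> X \<le> ES_Lambda M \<Lambda> X"
proof (rule ereal_le_by_reals)
  interpret P: prob_space M by (fact P)
  interpret l1var M X by unfold_locales (use X in auto)
  fix x assume lt: "ES_Lambda M \<Lambda> X < ereal x"
  have "min (ES M (\<Lambda> x) X) (ereal x) \<le> ES_Lambda M \<Lambda> X" unfolding ES_Lambda_def by (rule SUP_upper) simp
  then have "min (ES M (\<Lambda> x) X) (ereal x) < ereal x" using lt by simp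
  then have "ES M (\<Lambda> x) X < ereal x" by (simp add: min_less_iff_disj)
  then have "VaR M (\<Lambda> x) X < ereal x" using ES_ge_VaR[of "\<Lambda> x"] \<Lambda>[of x] by simp
  then obtain y where y: "\<Lambda> x \<le> F y" "y < x" unfolding VaR_def Inf_less_iff by auto
  then have "\<Lambda> x \<le> F x" using F_mono[of y x] by simp
  then have "ereal x \<in> ereal ` {x. \<Lambda> x \<le> F x}" by simp
  then show "VaR_Lambda M \<Lambda> X \<le> ereal x" unfolding VaR_Lambda_def by (rule Inf_lower)
qed

lemma VaR_plus_Lambda_le_ES:
  assumes P: "prob_space M" and X: "integrable M X" and \<Lambda>: "\<And>x. 0 \<le> \<Lambda> x \<and> \<Lambda> x < 1"
  shows "VaR_plus_Lambda M \<Lambda> X \<le> ES_Lambda M \<Lambda> X"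
proof (rule ereal_le_by_reals)
  interpret P: prob_space M by (fact P)
  interpret l1var M X by unfold_locales (use X in auto)
  fix x assume lt: "ES_Lambda M \<Lambda> X < ereal x"
  have "min (ES M (\<Lambda> x) X) (ereal x) \<le> ES_Lambda M \<Lambda> X" unfolding ES_Lambda_def by (rule SUP_upper) simp
  then have "min (ES M (\<Lambda> x) X) (ereal x) < ereal x" using lt by simp
  then have "ES M (\<Lambda> x) X < ereal x" by (simp add: min_less_iff_disj)
  then have "VaR_plus M (\<Lambda> x) X < ereal x" using ES_ge_VaR_plus[of "\<Lambda> x"] \<Lambda>[of x] by simp
  then obtain y where y: "\<Lambda> x < F y" "y < x" unfolding VaR_plus_def Inf_less_iff by auto
  then have "\<Lambda> x < F x" using F_mono[of y x] by simp
  then have "ereal x \<in> ereal ` {x. \<Lambda> x < F x}" by simp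
  then show "VaR_plus_Lambda M \<Lambda> X \<le> ereal x" unfolding VaR_plus_Lambda_def by (rule Inf_lower)
qed



lemma cdf_le_lt:
  assumes P: "prob_space M" and Y[measurable]: "Y \<in> borel_measurable M" and zt: "z < t"
  shows "cdf_rv M Y z \<le> measure M {\<omega> \<in> space M. Y \<omega> < t}"
proof -
  interpret prob_space M by (fact P)
  show ?thesis unfolding cdf_rv_def
    by (rule finite_measure_mono) (use zt in auto)
qed

lemma VaR_Lambda_ge:
  assumes "\<And>z. z < t \<Longrightarrow> cdf_rv M Y z < \<Lambda> z"
  shows "ereal t \<le> VaR_Lambda M \<Lambda> Y"
  unfolding VaR_Lambda_def
proof (rule Inf_greatest)
  fix w assume "w \<in> ereal ` {x. \<Lambda> x \<le> cdf_rv M Y x}"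
  then obtain z where z: "w = ereal z" "\<Lambda> z \<le> cdf_rv M Y z" by auto
  have "\<not> z < t" using assms[of z] z(2) by auto
  then show "ereal t \<le> w" using z(1) by simp
qed

lemma VaR_plus_Lambda_ge:
  assumes "\<And>z. z < t \<Longrightarrow> cdf_rv M Y z \<le> \<Lambda> z"
  shows "ereal t \<le> VaR_plus_Lambda M \<Lambda> Y"
  unfolding VaR_plus_Lambda_def
proof (rule Inf_greatest)
  fix w assume "w \<in> ereal ` {x. \<Lambda> x < cdf_rv M Y x}"
  then obtain z where z: "w = ereal z" "\<Lambda> z < cdf_rv M Y z" by auto
  have "\<not> z < t" using assms[of z] z(2) by auto
  then show "ereal t \<le> w" using z(1) by simp
qed

context rvar
begin

lemma qf_ge_lower:
  assumes c: "AE \<omega> in M. c \<le> X \<omega>" and v: "0 < v" "v < 1"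
  shows "c \<le> qf v"
proof (rule ccontr)
  assume "\<not> c \<le> qf v"
  then have lt: "qf v < c" by simp
  have "AE \<omega> in M. \<not> X \<omega> \<le> qf v" using c by eventually_elim (use lt in auto)
  then have "\<P>(\<omega> in M. X \<omega> \<le> qf v) = 0" by (rule prob_eq_0_AE)
  then have "F (qf v) = 0" unfolding cdf_rv_def by simp
  moreover have "v \<le> F (qf v)" using F_qf[OF v] .
  ultimately show False using v by simp
qed

end

lemma min_part_i:
  assumes P: "prob_space M" and al: "atomless M" and anti: "antimono \<Lambda>"
    and \<Lambda>: "\<And>x. 0 < \<Lambda> x \<and> \<Lambda> x \<le> 1"
    and \<rho>b: "\<forall>X\<in>L1 M. VaR_Lambda M \<Lambda> X \<le> \<rho> X"
    and qc: "quasi_convex_on (L1 M) \<rho>" and li: "law_invariant_on M (L1 M) \<rho>"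
    and XL: "X \<in> L1 M"
  shows "ES_Lambda M \<Lambda> X \<le> \<rho> X"
proof -
  interpret P: prob_space M by (fact P)
  have Xi: "integrable M X" using XL unfolding L1_def by simp
  interpret l1var M X by unfold_locales (use Xi in auto)
  show ?thesis unfolding ES_Lambda_def
  proof (rule SUP_least)
    fix x :: real
    show "min (ES M (\<Lambda> x) X) (ereal x) \<le> \<rho> X"
    proof (rule dense_le)
      fix y assume y: "y < min (ES M (\<Lambda> x) X) (ereal x)"
      show "y \<le> \<rho> X"
      proof (cases y)
        case MInf then show ?thesis by simp
      next
        case PInf then show ?thesis using y by simp
      next
        case (real t)
        have tx: "t < x" and tE: "ereal t < ES M (\<Lambda> x) X" using y real by auto
        have \<Lambda>z: "\<Lambda> x \<le> \<Lambda> z" if "z < t" for z using anti that tx unfolding antimono_def by auto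
        show ?thesis
        proof (cases "\<Lambda> x = 1")
          case True
          have "ereal t < VaR M 1 X" using tE True by (simp add: ES_def)
          have "cdf_rv M X z < \<Lambda> z" if zt: "z < t" for z
          proof (rule ccontr)
            assume "\<not> cdf_rv M X z < \<Lambda> z"
            then have "1 \<le> cdf_rv M X z" using \<Lambda>z[OF zt] True \<Lambda>[of z] by auto
            then have "VaR M 1 X \<le> ereal z" unfolding VaR_def by (intro Inf_lower) auto
            with \<open>ereal t < VaR M 1 X\<close> have "ereal t < ereal z" by (rule less_le_trans)
            then show False using zt by simp
          qed
          then have "ereal t \<le> VaR_Lambda M \<Lambda> X" by (rule VaR_Lambda_ge)
          also have "\<dots> \<le> \<rho> X" using \<rho>b XL by auto
          finally show ?thesis using real by simp
        next
          case False
          then have a: "0 < \<Lambda> x" "\<Lambda> x < 1" using \<Lambda>[of x] by auto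
          have "t < I (\<Lambda> x) / (1 - \<Lambda> x)" using tE a by (simp add: ES_eq')
          then obtain a' where a': "0 < a'" "a' < \<Lambda> x" "t < I a' / (1 - a')"
            using ES_left[OF a] by blast
          have "\<exists>Y\<in>L1 M. \<rho> Y \<le> \<rho> X \<and> measure M {\<omega> \<in> space M. Y \<omega> < t} \<le> a'"
          proof (rule core[OF al Xi _ _ XL qc li])
            show "Y \<in> L1 M" if "Y \<in> borel_measurable M" "distr M borel Y = distr M borel X" for Y
              using L1_cl[OF XL that] .
            show "(\<lambda>\<omega>. \<gamma> * X \<omega> + (1 - \<gamma>) * Y \<omega>) \<in> L1 M" if "X \<in> L1 M" "Y \<in> L1 M" for X Y and \<gamma> :: real
              using L1_conv[OF that] .
            show "0 \<le> a'" "a' < 1" using a' a by auto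
            show "qf a' \<le> qf v" if "a' \<le> v" "0 < v" "v < 1" for v using qf_mono[of a' v] a' that by simp
            show "t < (LINT v:{a'<..<1}|lborel. qf v) / (1 - a')" using a'(3) unfolding I_def .
          qed
          then obtain Y where Y: "Y \<in> L1 M" "\<rho> Y \<le> \<rho> X" "measure M {\<omega> \<in> space M. Y \<omega> < t} \<le> a'"
            by blast
          have Ym: "Y \<in> borel_measurable M" using Y(1) unfolding L1_def by auto
          have "cdf_rv M Y z < \<Lambda> z" if zt: "z < t" for z
          proof -
            have "cdf_rv M Y z \<le> a'" using cdf_le_lt[OF P Ym zt] Y(3) by simp
            then show ?thesis using a'(2) \<Lambda>z[OF zt] by simp
          qed
          then have "ereal t \<le> VaR_Lambda M \<Lambda> Y" by (rule VaR_Lambda_ge)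
          also have "\<dots> \<le> \<rho> Y" using \<rho>b Y(1) by auto
          also have "\<dots> \<le> \<rho> X" by (rule Y(2))
          finally show ?thesis using real by simp
        qed
      qed
    qed
  qed
qed

lemma min_part_plus:
  assumes P: "prob_space M" and al: "atomless M" and anti: "antimono \<Lambda>"
    and \<Lambda>: "\<And>x. 0 \<le> \<Lambda> x \<and> \<Lambda> x < 1"
    and DL: "D \<subseteq> L1 M"
    and conv: "\<And>X Y \<gamma>. X \<in> D \<Longrightarrow> Y \<in> D \<Longrightarrow> 0 \<le> \<gamma> \<Longrightarrow> \<gamma> \<le> 1 \<Longrightarrow> (\<lambda>\<omega>. \<gamma> * X \<omega> + (1 - \<gamma>) * Y \<omega>) \<in> D"
    and Dcl: "\<And>X Y. X \<in> D \<Longrightarrow> Y \<in> borel_measurable M \<Longrightarrow> distr M borel Y = distr M borel X \<Longrightarrow> Y \<in> D"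
    and bb: "\<And>X x. X \<in> D \<Longrightarrow> \<Lambda> x = 0 \<Longrightarrow> \<exists>c. AE \<omega> in M. c \<le> X \<omega>"
    and \<rho>b: "\<forall>X\<in>D. VaR_plus_Lambda M \<Lambda> X \<le> \<rho> X"
    and qc: "quasi_convex_on D \<rho>" and li: "law_invariant_on M D \<rho>"
    and XD: "X \<in> D"
  shows "ES_Lambda M \<Lambda> X \<le> \<rho> X"
proof -
  interpret P: prob_space M by (fact P)
  have Xi: "integrable M X" using XD DL unfolding L1_def by auto
  interpret l1var M X by unfold_locales (use Xi in auto)
  show ?thesis unfolding ES_Lambda_def
  proof (rule SUP_least)
    fix x :: real
    show "min (ES M (\<Lambda> x) X) (ereal x) \<le> \<rho> X"
    proof (rule dense_le)
      fix y assume y: "y < min (ES M (\<Lambda> x) X) (ereal x)"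
      show "y \<le> \<rho> X"
      proof (cases y)
        case MInf then show ?thesis by simp
      next
        case PInf then show ?thesis using y by simp
      next
        case (real t)
        have tx: "t < x" and tE: "ereal t < ES M (\<Lambda> x) X" using y real by auto
        have \<Lambda>z: "\<Lambda> x \<le> \<Lambda> z" if "z < t" for z using anti that tx unfolding antimono_def by auto
        have a: "0 \<le> \<Lambda> x" "\<Lambda> x < 1" using \<Lambda>[of x] by auto
        have tI: "t < I (\<Lambda> x) / (1 - \<Lambda> x)" using tE a by (simp add: ES_eq')
        obtain b where b: "\<And>v. \<Lambda> x \<le> v \<Longrightarrow> 0 < v \<Longrightarrow> v < 1 \<Longrightarrow> b \<le> qf v"
        proof (cases "\<Lambda> x = 0")
          case True
          then obtain c where c: "AE \<omega> in M. c \<le> X \<omega>" using bb[OF XD] by blast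
          show ?thesis by (rule that[of c]) (use qf_ge_lower[OF c] in auto)
        next
          case False
          then have "0 < \<Lambda> x" using a by simp
          then show ?thesis using that[of "qf (\<Lambda> x)"] qf_mono by auto
        qed
        have "\<exists>Y\<in>D. \<rho> Y \<le> \<rho> X \<and> measure M {\<omega> \<in> space M. Y \<omega> < t} \<le> \<Lambda> x"
        proof (rule core[OF al Xi _ conv XD qc li a b])
          show "Y \<in> D" if "Y \<in> borel_measurable M" "distr M borel Y = distr M borel X" for Y
            using Dcl[OF XD that] .
          show "t < (LINT v:{\<Lambda> x<..<1}|lborel. qf v) / (1 - \<Lambda> x)" using tI unfolding I_def .
        qed auto
        then obtain Y where Y: "Y \<in> D" "\<rho> Y \<le> \<rho> X" "measure M {\<omega> \<in> space M. Y \<omega> < t} \<le> \<Lambda> x"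
          by blast
        have Ym: "Y \<in> borel_measurable M" using Y(1) DL unfolding L1_def by auto
        have "cdf_rv M Y z \<le> \<Lambda> z" if zt: "z < t" for z
          using cdf_le_lt[OF P Ym zt] Y(3) \<Lambda>z[OF zt] by simp
        then have "ereal t \<le> VaR_plus_Lambda M \<Lambda> Y" by (rule VaR_plus_Lambda_ge)
        also have "\<dots> \<le> \<rho> Y" using \<rho>b Y(1) by auto
        also have "\<dots> \<le> \<rho> X" by (rule Y(2))
        finally show ?thesis using real by simp
      qed
    qed
  qed
qed

theorem theorem6:
  fixes M :: "'a measure"
  assumes "prob_space M" and "atomless M"
  shows
   "(\<forall>\<Lambda>::real \<Rightarrow> real. antimono \<Lambda> \<and> (\<forall>x. 0 < \<Lambda> x \<and> \<Lambda> x \<le> 1) \<longrightarrow>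
        is_min_qc_li_above M (L1 M) (VaR_Lambda M \<Lambda>) (ES_Lambda M \<Lambda>))
  \<and> (\<forall>\<Lambda>::real \<Rightarrow> real. antimono \<Lambda> \<and> (\<forall>x. 0 < \<Lambda> x \<and> \<Lambda> x < 1) \<longrightarrow>
        is_min_qc_li_above M (L1 M) (VaR_plus_Lambda M \<Lambda>) (ES_Lambda M \<Lambda>))
  \<and> (\<forall>\<Lambda>::real \<Rightarrow> real. antimono \<Lambda> \<and> (\<forall>x. 0 \<le> \<Lambda> x \<and> \<Lambda> x < 1) \<longrightarrow>
        is_min_qc_li_above M (L1_bdd_below M) (VaR_plus_Lambda M \<Lambda>) (ES_Lambda M \<Lambda>))
  \<and> (\<forall>\<Lambda>::real \<Rightarrow> real. antimono \<Lambda> \<and> (\<forall>x. 0 \<le> \<Lambda> x \<and> \<Lambda> x \<le> 1) \<longrightarrow>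
        (\<forall>X\<in>L1 M. ES_Lambda M \<Lambda> X = (INF x::real. max (ES M (\<Lambda> x) X) (ereal x))))"
proof (intro conjI allI impI)
  note P = assms(1) and al = assms(2)
  have L1conv: "\<And>X Y \<gamma>. X \<in> L1 M \<Longrightarrow> Y \<in> L1 M \<Longrightarrow> 0 \<le> \<gamma> \<Longrightarrow> \<gamma> \<le> 1 \<Longrightarrow> (\<lambda>\<omega>. \<gamma> * X \<omega> + (1 - \<gamma>) * Y \<omega>) \<in> L1 M"
    using L1_conv by blast
  have bbL: "L1_bdd_below M \<subseteq> L1 M" unfolding L1_bdd_below_def L1_def by auto
  fix \<Lambda> :: "real \<Rightarrow> real"
  {
    assume H: "antimono \<Lambda> \<and> (\<forall>x. 0 < \<Lambda> x \<and> \<Lambda> x \<le> 1)"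
    then have anti: "antimono \<Lambda>" and \<Lambda>: "\<And>x. 0 < \<Lambda> x \<and> \<Lambda> x \<le> 1" by auto
    have \<Lambda>': "\<And>x. 0 \<le> \<Lambda> x \<and> \<Lambda> x \<le> 1" using \<Lambda> by (meson less_imp_le)
    show "is_min_qc_li_above M (L1 M) (VaR_Lambda M \<Lambda>) (ES_Lambda M \<Lambda>)"
      unfolding is_min_qc_li_above_def
    proof (intro conjI ballI allI impI)
      show "VaR_Lambda M \<Lambda> X \<le> ES_Lambda M \<Lambda> X" if "X \<in> L1 M" for X
        by (rule VaR_Lambda_le_ES[OF P _ \<Lambda>]) (use that in \<open>simp add: L1_def\<close>)
      show "quasi_convex_on (L1 M) (ES_Lambda M \<Lambda>)" by (rule ES_Lambda_qc[OF P _ L1conv \<Lambda>']) simp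
      show "law_invariant_on M (L1 M) (ES_Lambda M \<Lambda>)" by (rule ES_Lambda_li) simp
      fix \<rho> X
      assume H2: "(\<forall>X\<in>L1 M. VaR_Lambda M \<Lambda> X \<le> \<rho> X) \<and> quasi_convex_on (L1 M) \<rho> \<and> law_invariant_on M (L1 M) \<rho>"
        and XL: "X \<in> L1 M"
      show "ES_Lambda M \<Lambda> X \<le> \<rho> X"
        by (rule min_part_i[OF P al anti \<Lambda> _ _ _ XL]) (use H2 in auto)
    qed
  }
  {
    assume H: "antimono \<Lambda> \<and> (\<forall>x. 0 < \<Lambda> x \<and> \<Lambda> x < 1)"
    then have anti: "antimono \<Lambda>" and \<Lambda>: "\<And>x. 0 \<le> \<Lambda> x \<and> \<Lambda> x < 1" and pos: "\<And>x. 0 < \<Lambda> x"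
      by (auto simp: less_imp_le)
    have \<Lambda>': "\<And>x. 0 \<le> \<Lambda> x \<and> \<Lambda> x \<le> 1" using \<Lambda> by (meson less_imp_le)
    show "is_min_qc_li_above M (L1 M) (VaR_plus_Lambda M \<Lambda>) (ES_Lambda M \<Lambda>)"
      unfolding is_min_qc_li_above_def
    proof (intro conjI ballI allI impI)
      show "VaR_plus_Lambda M \<Lambda> X \<le> ES_Lambda M \<Lambda> X" if "X \<in> L1 M" for X
        by (rule VaR_plus_Lambda_le_ES[OF P _ \<Lambda>]) (use that in \<open>simp add: L1_def\<close>)
      show "quasi_convex_on (L1 M) (ES_Lambda M \<Lambda>)" by (rule ES_Lambda_qc[OF P _ L1conv \<Lambda>']) simp
      show "law_invariant_on M (L1 M) (ES_Lambda M \<Lambda>)" by (rule ES_Lambda_li) simp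
      fix \<rho> X
      assume H2: "(\<forall>X\<in>L1 M. VaR_plus_Lambda M \<Lambda> X \<le> \<rho> X) \<and> quasi_convex_on (L1 M) \<rho> \<and> law_invariant_on M (L1 M) \<rho>"
        and XL: "X \<in> L1 M"
      show "ES_Lambda M \<Lambda> X \<le> \<rho> X"
      proof (rule min_part_plus[OF P al anti \<Lambda> _ L1conv _ _ _ _ _ XL])
        show "Y \<in> L1 M" if "X \<in> L1 M" "Y \<in> borel_measurable M" "distr M borel Y = distr M borel X" for X Y
          using L1_cl[OF that] .
        show "\<exists>c. AE \<omega> in M. c \<le> X \<omega>" if "\<Lambda> x = 0" for X x using pos[of x] that by simp
      qed (use H2 in auto)
    qed
  }
  {
    assume H: "antimono \<Lambda> \<and> (\<forall>x. 0 \<le> \<Lambda> x \<and> \<Lambda> x < 1)"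
    then have anti: "antimono \<Lambda>" and \<Lambda>: "\<And>x. 0 \<le> \<Lambda> x \<and> \<Lambda> x < 1" by auto
    have \<Lambda>': "\<And>x. 0 \<le> \<Lambda> x \<and> \<Lambda> x \<le> 1" using \<Lambda> by (meson less_imp_le)
    show "is_min_qc_li_above M (L1_bdd_below M) (VaR_plus_Lambda M \<Lambda>) (ES_Lambda M \<Lambda>)"
      unfolding is_min_qc_li_above_def
    proof (intro conjI ballI allI impI)
      show "VaR_plus_Lambda M \<Lambda> X \<le> ES_Lambda M \<Lambda> X" if "X \<in> L1_bdd_below M" for X
        by (rule VaR_plus_Lambda_le_ES[OF P _ \<Lambda>]) (use that in \<open>simp add: L1_bdd_below_def\<close>)
      show "quasi_convex_on (L1_bdd_below M) (ES_Lambda M \<Lambda>)"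
        by (rule ES_Lambda_qc[OF P bbL _ \<Lambda>']) (rule L1bb_conv)
      show "law_invariant_on M (L1_bdd_below M) (ES_Lambda M \<Lambda>)" by (rule ES_Lambda_li[OF bbL])
      fix \<rho> X
      assume H2: "(\<forall>X\<in>L1_bdd_below M. VaR_plus_Lambda M \<Lambda> X \<le> \<rho> X) \<and> quasi_convex_on (L1_bdd_below M) \<rho>
          \<and> law_invariant_on M (L1_bdd_below M) \<rho>"
        and XL: "X \<in> L1_bdd_below M"
      show "ES_Lambda M \<Lambda> X \<le> \<rho> X"
      proof (rule min_part_plus[OF P al anti \<Lambda> bbL _ _ _ _ _ _ XL])
        show "(\<lambda>\<omega>. \<gamma> * X \<omega> + (1 - \<gamma>) * Y \<omega>) \<in> L1_bdd_below M"
          if "X \<in> L1_bdd_below M" "Y \<in> L1_bdd_below M" "0 \<le> \<gamma>" "\<gamma> \<le> 1" for X Y and \<gamma> :: real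
          using L1bb_conv[OF that] .
        show "Y \<in> L1_bdd_below M" if "X \<in> L1_bdd_below M" "Y \<in> borel_measurable M" "distr M borel Y = distr M borel X" for X Y
          using L1bb_cl[OF that] .
        show "\<exists>c. AE \<omega> in M. c \<le> X \<omega>" if "X \<in> L1_bdd_below M" for X
          using that unfolding L1_bdd_below_def by auto
      qed (use H2 in auto)
    qed
  }
  {
    assume H: "antimono \<Lambda> \<and> (\<forall>x. 0 \<le> \<Lambda> x \<and> \<Lambda> x \<le> 1)"
    then have anti: "antimono \<Lambda>" and \<Lambda>: "\<And>x. 0 \<le> \<Lambda> x \<and> \<Lambda> x \<le> 1" by auto
    show "\<forall>X\<in>L1 M. ES_Lambda M \<Lambda> X = (INF x. max (ES M (\<Lambda> x) X) (ereal x))"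
    proof
      fix X assume XL: "X \<in> L1 M"
      interpret P: prob_space M by (fact P)
      have Xi: "integrable M X" using XL unfolding L1_def by simp
      interpret l1var M X by unfold_locales (use Xi in auto)
      have "antimono (\<lambda>x. ES M (\<Lambda> x) X)"
        unfolding antimono_def
      proof (intro allI impI)
        fix x y :: real assume "x \<le> y"
        then have "\<Lambda> y \<le> \<Lambda> x" using anti unfolding antimono_def by auto
        then show "ES M (\<Lambda> y) X \<le> ES M (\<Lambda> x) X" using ES_mono_full \<Lambda> by auto
      qed
      then show "ES_Lambda M \<Lambda> X = (INF x. max (ES M (\<Lambda> x) X) (ereal x))"
        unfolding ES_Lambda_def by (rule sup_min_inf_max)
    qed
  }
qed


end
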